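(* For all rigid analytically trivial dual $t$-motives $H_0,H_1$, the natural map $\mathrm{Hom}_{\bar k[t,\sigma]}(H_0,H_1)\to\mathrm{Hom}_{\mathbb F_q[t]}(H_0^{\mathrm{Betti}},H_1^{\mathrm{Betti}})$ is injective and its cokernel has no $\mathbb F_q[t]$-torsion.
   Context: $\bar k$ is the algebraic closure of $k=\mathbb F_q(T)$ in $\mathbb C_\infty$ (completion of an algebraic closure of $\mathbb F_q((1/T))$, $|T|_\infty=q$). $\mathbb C_\infty\{t\}$ is the ring of power series over $\mathbb C_\infty$ converging on $|t|_\infty\le1$; for $g=\sum a_it^i$, $g^{(-1)}=\sum a_i^{1/q}t^i$. $\bar k[t,\sigma]$ is generated over $\bar k$ by a central variable $t$ and $\sigma$ with $\sigma x=x^{q^{-1}}\sigma$. A dual $t$-motive is a left $\bar k[t,\sigma]$-module free of finite rank over $\bar k[t]$ and over $\bar k[\sigma]$ with $(t-T)^nH\subset\sigma H$ for $n\gg0$. For a dual $t$-motive $H$, $\tilde H=\mathbb C_\infty\{t\}\otimes_{\bar k[t]}H$ with $\sigma(g\otimes h)=g^{(-1)}\otimes\sigma h$, and $H^{\mathrm{Betti}}$ is the $\mathbb F_q[t]$-module of $\sigma$-invariants of $\tilde H$; $H$ is rigid analytically trivial if the natural map $\mathbb C_\infty\{t\}\otimes_{\mathbb F_q[t]}H^{\mathrm{Betti}}\to\tilde H$ is bijective. A morphism $H_0\to H_1$ induces an $\mathbb F_q[t]$-linear map $H_0^{\mathrm{Betti}}\to H_1^{\mathrm{Betti}}$ by $\mathbb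 C_\infty\{t\}$-linear extension. *)

theory Defs
  imports Complex_Main "HOL-Computational_Algebra.Polynomial" "HOL-Library.Cardinality"
begin

section \<open>The field C_infinity, axiomatised up to isomorphism\<close>

text \<open>F_q is a finite field type 'f, q = CARD('f). A polynomial over 'f is an
element of F_q[T]; iota embeds F_q[T] into the field 'c (playing C_infinity),
v is the absolute value on 'c.\<close>

definition kfield :: "('f::{finite,field} poly \<Rightarrow> 'c::field) \<Rightarrow> 'c set" where
  "kfield \<iota> = {\<iota> a / \<iota> b | a b. b \<noteq> 0}"

definition kbar :: "('f::{finite,field} poly \<Rightarrow> 'c::field) \<Rightarrow> 'c set" where
  "kbar \<iota> = {x. \<exists>p::'c poly. p \<noteq> 0 \<and> (\<forall>i. coeff p i \<in> kfield \<iota>) \<and> poly p x = 0}"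

definition Cinf :: "('f::{finite,field} poly \<Rightarrow> 'c::field) \<Rightarrow> ('c \<Rightarrow> real) \<Rightarrow> bool" where
  "Cinf \<iota> v \<longleftrightarrow>
     (\<forall>a b. \<iota> (a + b) = \<iota> a + \<iota> b) \<and> (\<forall>a b. \<iota> (a * b) = \<iota> a * \<iota> b) \<and> \<iota> 1 = 1 \<and> inj \<iota> \<and>
     (\<forall>x. v x \<ge> 0) \<and> (\<forall>x. v x = 0 \<longleftrightarrow> x = 0) \<and> (\<forall>x y. v (x * y) = v x * v y) \<and>
     (\<forall>x y. v (x + y) \<le> max (v x) (v y)) \<and>
     (\<forall>p. p \<noteq> 0 \<longrightarrow> v (\<iota> p) = real CARD('f) ^ degree p) \<and>
     (\<forall>s::nat \<Rightarrow> 'c. (\<forall>e>0. \<exists>N. \<forall>m\<ge>N. \<forall>n\<ge>N. v (s m - s n) < e) \<longrightarrow>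
         (\<exists>L. (\<lambda>n. v (s n - L)) \<longlonglongrightarrow> 0)) \<and>
     (\<forall>p::'c poly. degree p > 0 \<longrightarrow> (\<exists>x. poly p x = 0)) \<and>
     (\<forall>x e. e > 0 \<longrightarrow> (\<exists>y\<in>kbar \<iota>. v (x - y) < e))"

text \<open>q-th root (unique in characteristic p)\<close>
definition qroot :: "nat \<Rightarrow> 'c::field \<Rightarrow> 'c" where
  "qroot q x = (THE y. y ^ q = x)"

section \<open>Left kbar[t,sigma]-modules and dual t-motives\<close>

record ('c, 'h) ktsmod =
  kscal :: "'c \<Rightarrow> 'h \<Rightarrow> 'h"
  tact :: "'h \<Rightarrow> 'h"
  sact :: "'h \<Rightarrow> 'h"

definition kpoly :: "('f::{finite,field} poly \<Rightarrow> 'c::field) \<Rightarrow> 'c poly \<Rightarrow> bool" where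
  "kpoly \<iota> p \<longleftrightarrow> (\<forall>i. coeff p i \<in> kbar \<iota>)"

text \<open>action of sum_i a_i t^i, resp. sum_i a_i sigma^i (coefficients on the left)\<close>
definition tpoly :: "('c::field, 'h::ab_group_add) ktsmod \<Rightarrow> 'c poly \<Rightarrow> 'h \<Rightarrow> 'h" where
  "tpoly M p h = (\<Sum>i\<le>degree p. kscal M (coeff p i) ((tact M ^^ i) h))"

definition spoly :: "('c::field, 'h::ab_group_add) ktsmod \<Rightarrow> 'c poly \<Rightarrow> 'h \<Rightarrow> 'h" where
  "spoly M p h = (\<Sum>i\<le>degree p. kscal M (coeff p i) ((sact M ^^ i) h))"

definition kts_module :: "('f::{finite,field} poly \<Rightarrow> 'c::field) \<Rightarrow> ('c, 'h::ab_group_add) ktsmod \<Rightarrow> bool" where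
  "kts_module \<iota> M \<longleftrightarrow>
     (\<forall>x\<in>kbar \<iota>. \<forall>h h'. kscal M x (h + h') = kscal M x h + kscal M x h') \<and>
     (\<forall>x\<in>kbar \<iota>. \<forall>y\<in>kbar \<iota>. \<forall>h. kscal M (x + y) h = kscal M x h + kscal M y h) \<and>
     (\<forall>x\<in>kbar \<iota>. \<forall>y\<in>kbar \<iota>. \<forall>h. kscal M (x * y) h = kscal M x (kscal M y h)) \<and>
     (\<forall>h. kscal M 1 h = h) \<and>
     (\<forall>h h'. tact M (h + h') = tact M h + tact M h') \<and>
     (\<forall>x\<in>kbar \<iota>. \<forall>h. tact M (kscal M x h) = kscal M x (tact M h)) \<and>
     (\<forall>h h'. sact M (h + h') = sact M h + sact M h') \<and>
     (\<forall>x\<in>kbar \<iota>. \<forall>h. sact M (kscal M x h) = kscal M (qroot CARD('f) x) (sact M h)) \<and>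
     (\<forall>h. tact M (sact M h) = sact M (tact M h))"

definition free_fin :: "('f::{finite,field} poly \<Rightarrow> 'c::field) \<Rightarrow> ('c poly \<Rightarrow> 'h \<Rightarrow> 'h::ab_group_add) \<Rightarrow> bool" where
  "free_fin \<iota> act \<longleftrightarrow> (\<exists>b::'h list. \<forall>h. \<exists>!ps::'c poly list.
      length ps = length b \<and> (\<forall>p\<in>set ps. kpoly \<iota> p) \<and> h = (\<Sum>j<length b. act (ps ! j) (b ! j)))"

definition dual_t_motive :: "('f::{finite,field} poly \<Rightarrow> 'c::field) \<Rightarrow> ('c, 'h::ab_group_add) ktsmod \<Rightarrow> bool" where
  "dual_t_motive \<iota> M \<longleftrightarrow> kts_module \<iota> M \<and> free_fin \<iota> (tpoly M) \<and> free_fin \<iota> (spoly M) \<and>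
     (\<exists>N. \<forall>n\<ge>N. \<forall>h. \<exists>h'. tpoly M ([:- \<iota> [:0, 1:], 1:] ^ n) h = sact M h')"

section \<open>Tensor products (as formal sums modulo the tensor relations)\<close>

record ('a, 'b, 'r) tens_data =
  Adom :: "'a \<Rightarrow> bool"
  Bdom :: "'b \<Rightarrow> bool"
  Rs :: "'r \<Rightarrow> bool"
  aadd :: "'a \<Rightarrow> 'a \<Rightarrow> 'a"
  azero :: 'a
  badd :: "'b \<Rightarrow> 'b \<Rightarrow> 'b"
  bzero :: 'b
  ra :: "'r \<Rightarrow> 'a \<Rightarrow> 'a"
  rb :: "'r \<Rightarrow> 'b \<Rightarrow> 'b"
  Beq :: "'b \<Rightarrow> 'b \<Rightarrow> bool"

definition tvalid :: "('a, 'b, 'r) tens_data \<Rightarrow> ('a \<times> 'b) list \<Rightarrow> bool" where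
  "tvalid D L \<longleftrightarrow> (\<forall>(a, b)\<in>set L. Adom D a \<and> Bdom D b)"

inductive tens_eq :: "('a, 'b, 'r) tens_data \<Rightarrow> ('a \<times> 'b) list \<Rightarrow> ('a \<times> 'b) list \<Rightarrow> bool"
  for D where
  refl: "tens_eq D L L"
| sym: "tens_eq D L L' \<Longrightarrow> tens_eq D L' L"
| trans: "tens_eq D L L' \<Longrightarrow> tens_eq D L' L'' \<Longrightarrow> tens_eq D L L''"
| app: "tens_eq D L L' \<Longrightarrow> tens_eq D M M' \<Longrightarrow> tens_eq D (L @ M) (L' @ M')"
| comm: "tens_eq D (L @ M) (M @ L)"
| addl: "Adom D a \<Longrightarrow> Adom D a' \<Longrightarrow> Bdom D b \<Longrightarrow> tens_eq D [(aadd D a a', b)] [(a, b), (a', b)]"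
| addr: "Adom D a \<Longrightarrow> Bdom D b \<Longrightarrow> Bdom D b' \<Longrightarrow> tens_eq D [(a, badd D b b')] [(a, b), (a, b')]"
| zl: "Bdom D b \<Longrightarrow> tens_eq D [(azero D, b)] []"
| zr: "Adom D a \<Longrightarrow> tens_eq D [(a, bzero D)] []"
| bal: "Rs D r \<Longrightarrow> Adom D a \<Longrightarrow> Bdom D b \<Longrightarrow> tens_eq D [(ra D r a, b)] [(a, rb D r b)]"
| beq: "Adom D a \<Longrightarrow> Bdom D b \<Longrightarrow> Bdom D b' \<Longrightarrow> Beq D b b' \<Longrightarrow> tens_eq D [(a, b)] [(a, b')]"

section \<open>C_infinity{t}, H tilde, Betti realisation\<close>

type_synonym 'c series = "nat \<Rightarrow> 'c"

definition tate :: "('c \<Rightarrow> real) \<Rightarrow> 'c series \<Rightarrow> bool" where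
  "tate v g \<longleftrightarrow> (\<lambda>n. v (g n)) \<longlonglongrightarrow> 0"

definition sadd :: "'c::field series \<Rightarrow> 'c series \<Rightarrow> 'c series" where
  "sadd g g' = (\<lambda>n. g n + g' n)"

definition smult_ser :: "'c::field series \<Rightarrow> 'c series \<Rightarrow> 'c series" where
  "smult_ser g g' = (\<lambda>n. \<Sum>i\<le>n. g i * g' (n - i))"

definition polyser :: "'c::field poly \<Rightarrow> 'c series" where
  "polyser p = (\<lambda>n. coeff p n)"

text \<open>g^(-1)\<close>
definition twist :: "nat \<Rightarrow> 'c::field series \<Rightarrow> 'c series" where
  "twist q g = (\<lambda>n. qroot q (g n))"

text \<open>data of C_infinity{t} tensor_{kbar[t]} H\<close>
definition tildeD :: "('f::{finite,field} poly \<Rightarrow> 'c::field) \<Rightarrow> ('c \<Rightarrow> real) \<Rightarrow> ('c, 'h::ab_group_add) ktsmod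
    \<Rightarrow> ('c series, 'h, 'c poly) tens_data" where
  "tildeD \<iota> v M = \<lparr>Adom = tate v, Bdom = (\<lambda>_. True), Rs = kpoly \<iota>, aadd = sadd, azero = (\<lambda>n. 0),
      badd = (+), bzero = 0, ra = (\<lambda>r g. smult_ser (polyser r) g), rb = tpoly M, Beq = (=)\<rparr>"

definition teq :: "('f::{finite,field} poly \<Rightarrow> 'c::field) \<Rightarrow> ('c \<Rightarrow> real) \<Rightarrow> ('c, 'h::ab_group_add) ktsmod
    \<Rightarrow> ('c series \<times> 'h) list \<Rightarrow> ('c series \<times> 'h) list \<Rightarrow> bool" where
  "teq \<iota> v M = tens_eq (tildeD \<iota> v M)"

definition sig_tilde :: "('f::{finite,field} poly \<Rightarrow> 'c::field) \<Rightarrow> ('c, 'h::ab_group_add) ktsmod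
    \<Rightarrow> ('c series \<times> 'h) list \<Rightarrow> ('c series \<times> 'h) list" where
  "sig_tilde \<iota> M L = map (\<lambda>(g, h). (twist CARD('f) g, sact M h)) L"

text \<open>representatives of elements of H^Betti\<close>
definition betti :: "('f::{finite,field} poly \<Rightarrow> 'c::field) \<Rightarrow> ('c \<Rightarrow> real) \<Rightarrow> ('c, 'h::ab_group_add) ktsmod
    \<Rightarrow> ('c series \<times> 'h) list \<Rightarrow> bool" where
  "betti \<iota> v M L \<longleftrightarrow> tvalid (tildeD \<iota> v M) L \<and> teq \<iota> v M (sig_tilde \<iota> M L) L"

definition fqser :: "('f::{finite,field} poly \<Rightarrow> 'c::field) \<Rightarrow> 'f poly \<Rightarrow> 'c series" where
  "fqser \<iota> a = polyser (map_poly (\<lambda>c. \<iota> [:c:]) a)"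

definition fqact :: "('f::{finite,field} poly \<Rightarrow> 'c::field) \<Rightarrow> 'f poly
    \<Rightarrow> ('c series \<times> 'h) list \<Rightarrow> ('c series \<times> 'h) list" where
  "fqact \<iota> a L = map (\<lambda>(g, h). (smult_ser (fqser \<iota> a) g, h)) L"

text \<open>data of C_infinity{t} tensor_{F_q[t]} H^Betti\<close>
definition bettiD :: "('f::{finite,field} poly \<Rightarrow> 'c::field) \<Rightarrow> ('c \<Rightarrow> real) \<Rightarrow> ('c, 'h::ab_group_add) ktsmod
    \<Rightarrow> ('c series, ('c series \<times> 'h) list, 'f poly) tens_data" where
  "bettiD \<iota> v M = \<lparr>Adom = tate v, Bdom = betti \<iota> v M, Rs = (\<lambda>_. True), aadd = sadd, azero = (\<lambda>n. 0),
      badd = (@), bzero = [], ra = (\<lambda>a g. smult_ser (fqser \<iota> a) g), rb = fqact \<iota>, Beq = teq \<iota> v M\<rparr>"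

definition rat_map :: "('c::field series \<times> ('c series \<times> 'h) list) list \<Rightarrow> ('c series \<times> 'h) list" where
  "rat_map K = concat (map (\<lambda>(g, L). map (\<lambda>(g', h). (smult_ser g g', h)) L) K)"

definition rigid_an_triv :: "('f::{finite,field} poly \<Rightarrow> 'c::field) \<Rightarrow> ('c \<Rightarrow> real) \<Rightarrow> ('c, 'h::ab_group_add) ktsmod \<Rightarrow> bool" where
  "rigid_an_triv \<iota> v M \<longleftrightarrow>
     (\<forall>X. tvalid (tildeD \<iota> v M) X \<longrightarrow> (\<exists>K. tvalid (bettiD \<iota> v M) K \<and> teq \<iota> v M (rat_map K) X)) \<and>
     (\<forall>K K'. tvalid (bettiD \<iota> v M) K \<longrightarrow> tvalid (bettiD \<iota> v M) K' \<longrightarrow>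
        teq \<iota> v M (rat_map K) (rat_map K') \<longrightarrow> tens_eq (bettiD \<iota> v M) K K')"

definition kts_morphism :: "('f::{finite,field} poly \<Rightarrow> 'c::field) \<Rightarrow> ('c, 'h0::ab_group_add) ktsmod
    \<Rightarrow> ('c, 'h1::ab_group_add) ktsmod \<Rightarrow> ('h0 \<Rightarrow> 'h1) \<Rightarrow> bool" where
  "kts_morphism \<iota> M0 M1 f \<longleftrightarrow> (\<forall>h h'. f (h + h') = f h + f h') \<and>
     (\<forall>x\<in>kbar \<iota>. \<forall>h. f (kscal M0 x h) = kscal M1 x (f h)) \<and>
     (\<forall>h. f (tact M0 h) = tact M1 (f h)) \<and> (\<forall>h. f (sact M0 h) = sact M1 (f h))"

definition betti_map :: "('h0 \<Rightarrow> 'h1) \<Rightarrow> ('c series \<times> 'h0) list \<Rightarrow> ('c series \<times> 'h1) list" where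
  "betti_map f L = map (\<lambda>(g, h). (g, f h)) L"

text \<open>F_q[t]-linear maps H0^Betti -> H1^Betti, on representatives\<close>
definition betti_hom :: "('f::{finite,field} poly \<Rightarrow> 'c::field) \<Rightarrow> ('c \<Rightarrow> real) \<Rightarrow> ('c, 'h0::ab_group_add) ktsmod
    \<Rightarrow> ('c, 'h1::ab_group_add) ktsmod \<Rightarrow> (('c series \<times> 'h0) list \<Rightarrow> ('c series \<times> 'h1) list) \<Rightarrow> bool" where
  "betti_hom \<iota> v M0 M1 \<psi> \<longleftrightarrow>
     (\<forall>L. betti \<iota> v M0 L \<longrightarrow> betti \<iota> v M1 (\<psi> L)) \<and>
     (\<forall>L L'. betti \<iota> v M0 L \<longrightarrow> betti \<iota> v M0 L' \<longrightarrow> teq \<iota> v M0 L L' \<longrightarrow> teq \<iota> v M1 (\<psi> L) (\<psi> L')) \<and>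
     (\<forall>L L'. betti \<iota> v M0 L \<longrightarrow> betti \<iota> v M0 L' \<longrightarrow> teq \<iota> v M1 (\<psi> (L @ L')) (\<psi> L @ \<psi> L')) \<and>
     (\<forall>a L. betti \<iota> v M0 L \<longrightarrow> teq \<iota> v M1 (\<psi> (fqact \<iota> a L)) (fqact \<iota> a (\<psi> L)))"

definition hom_eq :: "('f::{finite,field} poly \<Rightarrow> 'c::field) \<Rightarrow> ('c \<Rightarrow> real) \<Rightarrow> ('c, 'h0::ab_group_add) ktsmod
    \<Rightarrow> ('c, 'h1::ab_group_add) ktsmod \<Rightarrow> (('c series \<times> 'h0) list \<Rightarrow> ('c series \<times> 'h1) list)
    \<Rightarrow> (('c series \<times> 'h0) list \<Rightarrow> ('c series \<times> 'h1) list) \<Rightarrow> bool" where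
  "hom_eq \<iota> v M0 M1 \<psi> \<phi> \<longleftrightarrow> (\<forall>L. betti \<iota> v M0 L \<longrightarrow> teq \<iota> v M1 (\<psi> L) (\<phi> L))"

end

theory Submission
  imports Defs "HOL-Algebra.Finite_Extensions" "HOL-Algebra.Algebraic_Closure_Type"
    "HOL-Computational_Algebra.Polynomial_FPS"
begin

hide_const (open) Polynomials.degree Polynomials.lead_coeff UnivPoly.coeff UnivPoly.monom module.smult

abbreviation RC :: "'c::field ring" where "RC \<equiv> ring_of_type_algebra"

lemma RC_simps[simp]: "carrier RC = UNIV" "add RC x y = x + y" "mult RC x y = x * y"
  "zero RC = 0" "one RC = 1"
  by (simp_all add: ring_of_type_algebra_def)

lemma RC_field: "field (RC :: 'c::field ring)"
  by (rule field_from_type_algebra)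

lemma RC_ring: "ring (RC :: 'c::field ring)"
  using RC_field field.is_ring by blast

lemma RC_domain: "domain (RC :: 'c::field ring)"
  using RC_field field.axioms(1) by blast

lemma RC_pow: "x [^]\<^bsub>(RC :: 'c::field ring)\<^esub> n = x ^ n"
  by (induction n) (simp_all add: mult.commute)

lemma RC_neg: "a_inv (RC :: 'c::field ring) x = - x"
proof -
  interpret ring "RC :: 'c ring" by (rule RC_ring)
  show ?thesis by (rule minus_equality) simp_all
qed

lemma RC_inv: "(x::'c::field) \<noteq> 0 \<Longrightarrow> m_inv (RC :: 'c ring) x = inverse x"
proof -
  assume "x \<noteq> 0"
  interpret field "RC :: 'c ring" by (rule RC_field)
  show ?thesis by (rule comm_inv_char) (simp_all add: \<open>x \<noteq> 0\<close>)
qed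

lemma RC_eval: "ring.eval (RC :: 'c::field ring) p x = poly (Poly (rev p)) x"
proof (induction p)
  case Nil
  then show ?case by (simp add: ring.eval.simps(1)[OF RC_ring])
next
  case (Cons a p)
  have "ring.eval (RC :: 'c::field ring) (a # p) x = a * x ^ length p + ring.eval RC p x"
    using ring.eval.simps(2)[OF RC_ring, of a p] by (simp add: RC_pow)
  also have "\<dots> = poly (Poly (rev (a # p))) x"
    using Cons by (simp add: Poly_append poly_monom algebra_simps)
  finally show ?case .
qed

locale cinf =
  fixes \<iota> :: "'f::{finite,field} poly \<Rightarrow> 'c::field" and v :: "'c \<Rightarrow> real"
  assumes Cinf: "Cinf \<iota> v"
begin

lemma iota_add: "\<iota> (a + b) = \<iota> a + \<iota> b" using Cinf unfolding Cinf_def by blast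
lemma iota_mult: "\<iota> (a * b) = \<iota> a * \<iota> b" using Cinf unfolding Cinf_def by blast
lemma iota_1[simp]: "\<iota> 1 = 1" using Cinf unfolding Cinf_def by blast
lemma iota_inj: "inj \<iota>" using Cinf unfolding Cinf_def by blast
lemma iota_0[simp]: "\<iota> 0 = 0"
proof -
  have "\<iota> 0 + \<iota> 0 = \<iota> 0 + 0" using iota_add[of 0 0] by simp
  then show ?thesis by (rule add_left_imp_eq)
qed
lemma iota_minus: "\<iota> (- a) = - \<iota> a"
  using iota_add[of a "-a"] by (simp add: eq_neg_iff_add_eq_0 add.commute)
lemma iota_diff: "\<iota> (a - b) = \<iota> a - \<iota> b"
  using iota_add[of a "-b"] iota_minus[of b] by simp
lemma iota_eq0: "\<iota> a = 0 \<longleftrightarrow> a = 0"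
  using iota_inj iota_0 by (metis injD)
lemma iota_power: "\<iota> (a ^ n) = \<iota> a ^ n"
  by (induction n) (simp_all add: iota_mult)
lemma iota_of_nat: "\<iota> (of_nat n) = of_nat n"
  by (induction n) (simp_all add: iota_add)

lemma v_nonneg: "v x \<ge> 0" using Cinf unfolding Cinf_def by blast
lemma v_zero_iff: "v x = 0 \<longleftrightarrow> x = 0" using Cinf unfolding Cinf_def by blast
lemma v_mult: "v (x * y) = v x * v y" using Cinf unfolding Cinf_def by blast
lemma v_ultra: "v (x + y) \<le> max (v x) (v y)" using Cinf unfolding Cinf_def by blast
lemma v_iota: "p \<noteq> 0 \<Longrightarrow> v (\<iota> p) = real CARD('f) ^ degree p" using Cinf unfolding Cinf_def by blast
lemma alg_closed: "degree p > 0 \<Longrightarrow> \<exists>x. poly p x = 0" for p :: "'c poly"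
  using Cinf unfolding Cinf_def by blast

lemma v_0[simp]: "v 0 = 0" using v_zero_iff by simp
lemma v_1[simp]: "v 1 = 1"
proof -
  have "v 1 = v 1 * v 1" using v_mult[of 1 1] by simp
  moreover have "v 1 \<noteq> 0" using v_zero_iff by simp
  ultimately show ?thesis by simp
qed
lemma v_neg1: "v (-1) = 1"
proof -
  have "v (-1) * v (-1) = 1" using v_mult[of "-1" "-1"] by simp
  moreover have "v (-1) \<ge> 0" by (rule v_nonneg)
  moreover have "(v (-1) - 1) * (v (-1) + 1) = v (-1) * v (-1) - 1" by (simp add: algebra_simps)
  ultimately have "(v (-1) - 1) * (v (-1) + 1) = 0" by simp
  moreover have "v (-1) + 1 \<noteq> 0" using \<open>v (-1) \<ge> 0\<close> by simp
  ultimately show ?thesis by simp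
qed
lemma v_uminus[simp]: "v (- x) = v x"
  using v_mult[of "-1" x] v_neg1 by simp
lemma v_diff_ultra: "v (x - y) \<le> max (v x) (v y)"
  using v_ultra[of x "-y"] by simp
lemma v_const: "c \<noteq> 0 \<Longrightarrow> v (\<iota> [:c:]) = 1"
  using v_iota[of "[:c:]"] by simp
lemma v_const_le: "v (\<iota> [:c:]) \<le> 1"
  by (cases "c = 0") (simp_all add: v_const)


lemma kfield_iota: "\<iota> a \<in> kfield \<iota>"
  unfolding kfield_def by (rule CollectI, rule exI[of _ a], rule exI[of _ 1]) simp

lemma kfield_0: "0 \<in> kfield \<iota>" using kfield_iota[of 0] by simp
lemma kfield_1: "1 \<in> kfield \<iota>" using kfield_iota[of 1] by simp

lemma kfieldE: assumes "x \<in> kfield \<iota>" obtains a b where "b \<noteq> 0" "\<iota> b \<noteq> 0" "x = \<iota> a / \<iota> b"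
  using assms iota_eq0 unfolding kfield_def by blast

lemma kfieldI: "b \<noteq> 0 \<Longrightarrow> \<iota> a / \<iota> b \<in> kfield \<iota>"
  unfolding kfield_def by blast

lemma kfield_add: assumes "x \<in> kfield \<iota>" "y \<in> kfield \<iota>" shows "x + y \<in> kfield \<iota>"
proof -
  obtain a b where ab: "b \<noteq> 0" "\<iota> b \<noteq> 0" "x = \<iota> a / \<iota> b" using assms(1) by (rule kfieldE)
  obtain c d where cd: "d \<noteq> 0" "\<iota> d \<noteq> 0" "y = \<iota> c / \<iota> d" using assms(2) by (rule kfieldE)
  have "x + y = \<iota> (a * d + c * b) / \<iota> (b * d)"
    using ab cd by (simp add: iota_add iota_mult field_simps)
  moreover have "b * d \<noteq> 0" using ab cd by simp
  ultimately show ?thesis using kfieldI by simp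
qed

lemma kfield_mult: assumes "x \<in> kfield \<iota>" "y \<in> kfield \<iota>" shows "x * y \<in> kfield \<iota>"
proof -
  obtain a b where ab: "b \<noteq> 0" "\<iota> b \<noteq> 0" "x = \<iota> a / \<iota> b" using assms(1) by (rule kfieldE)
  obtain c d where cd: "d \<noteq> 0" "\<iota> d \<noteq> 0" "y = \<iota> c / \<iota> d" using assms(2) by (rule kfieldE)
  have "x * y = \<iota> (a * c) / \<iota> (b * d)"
    using ab cd by (simp add: iota_add iota_mult field_simps)
  moreover have "b * d \<noteq> 0" using ab cd by simp
  ultimately show ?thesis using kfieldI by simp
qed

lemma kfield_uminus: assumes "x \<in> kfield \<iota>" shows "- x \<in> kfield \<iota>"
proof -
  obtain a b where ab: "b \<noteq> 0" "\<iota> b \<noteq> 0" "x = \<iota> a / \<iota> b" using assms(1) by (rule kfieldE)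
  have "- x = \<iota> (- a) / \<iota> b" using ab by (simp add: iota_minus)
  then show ?thesis using kfieldI ab by simp
qed

lemma kfield_inverse: assumes "x \<in> kfield \<iota>" shows "inverse x \<in> kfield \<iota>"
proof -
  obtain a b where ab: "b \<noteq> 0" "\<iota> b \<noteq> 0" "x = \<iota> a / \<iota> b" using assms(1) by (rule kfieldE)
  show ?thesis
  proof (cases "a = 0")
    case True then show ?thesis using ab kfield_0 by simp
  next
    case False
    then have "inverse x = \<iota> b / \<iota> a" using ab by simp
    then show ?thesis using kfieldI False by simp
  qed
qed

lemma kfield_subfield: "subfield (kfield \<iota>) RC"
proof -
  interpret field "RC :: 'c ring" by (rule RC_field)
  show ?thesis
  proof (rule subfieldI'[OF subringI])
    show "kfield \<iota> \<subseteq> carrier RC" by simp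
    show "\<one>\<^bsub>RC\<^esub> \<in> kfield \<iota>" using kfield_1 by simp
    show "\<ominus>\<^bsub>RC\<^esub> h \<in> kfield \<iota>" if "h \<in> kfield \<iota>" for h
      using that kfield_uminus by (simp add: RC_neg)
    show "h1 \<otimes>\<^bsub>RC\<^esub> h2 \<in> kfield \<iota>" if "h1 \<in> kfield \<iota>" "h2 \<in> kfield \<iota>" for h1 h2
      using that kfield_mult by simp
    show "h1 \<oplus>\<^bsub>RC\<^esub> h2 \<in> kfield \<iota>" if "h1 \<in> kfield \<iota>" "h2 \<in> kfield \<iota>" for h1 h2
      using that kfield_add by simp
    show "inv\<^bsub>RC\<^esub> k \<in> kfield \<iota>" if "k \<in> kfield \<iota> - {\<zero>\<^bsub>RC\<^esub>}" for k
    proof -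
      have k: "k \<in> kfield \<iota>" "k \<noteq> 0" using that by auto
      then have "inv\<^bsub>RC\<^esub> k = inverse k" using RC_inv by blast
      then show ?thesis using kfield_inverse k by simp
    qed
  qed
qed

lemma kbar_alg: "x \<in> kbar \<iota> \<longleftrightarrow> (ring.algebraic RC over (kfield \<iota>)) x"
proof
  assume "x \<in> kbar \<iota>"
  then obtain P where P: "P \<noteq> 0" "\<forall>i. coeff P i \<in> kfield \<iota>" "poly P x = 0"
    unfolding kbar_def by blast
  define p where "p = rev (coeffs P)"
  have "p \<noteq> []" using P(1) by (simp add: p_def)
  moreover have "set p \<subseteq> kfield \<iota>" using P(2) by (auto simp: p_def coeffs_def)
  moreover have "hd p \<noteq> 0" using P(1) by (simp add: p_def hd_rev last_coeffs_eq_coeff_degree)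
  ultimately have "p \<in> carrier (univ_poly RC (kfield \<iota>))"
    unfolding univ_poly_carrier[symmetric] polynomial_def by simp
  moreover have "ring.eval RC p x = \<zero>\<^bsub>RC\<^esub>" using P(3) by (simp add: RC_eval p_def)
  ultimately show "(ring.algebraic RC over (kfield \<iota>)) x"
    using ring.algebraicI[OF RC_ring] \<open>p \<noteq> []\<close> by blast
next
  assume alg: "(ring.algebraic RC over (kfield \<iota>)) x"
  obtain p where p: "p \<in> carrier (univ_poly RC (kfield \<iota>))" "p \<noteq> []" "ring.eval RC p x = \<zero>\<^bsub>RC\<^esub>"
    using domain.algebraicE[OF RC_domain subfieldE(1)[OF kfield_subfield] _ alg] by auto
  have pp: "set p \<subseteq> kfield \<iota>" "hd p \<noteq> 0"
    using p(1,2) unfolding univ_poly_carrier[symmetric] polynomial_def by auto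
  define P where "P = Poly (rev p)"
  have "P \<noteq> 0"
  proof
    assume "P = 0"
    then obtain n where "rev p = replicate n 0" unfolding P_def Poly_eq_0 by blast
    then have "p = replicate n 0" by (metis rev_replicate rev_rev_ident)
    then show False using pp(2) p(2) by (cases n) auto
  qed
  moreover have "coeff P i \<in> kfield \<iota>" for i
  proof -
    have "coeff P i = nth_default 0 (rev p) i" by (simp add: P_def)
    show ?thesis
    proof (cases "i < length p")
      case True
      then have "rev p ! i \<in> set (rev p)" by (intro nth_mem) simp
      then show ?thesis using pp(1) \<open>coeff P i = _\<close> True by (auto simp: nth_default_def)
    next
      case False
      then show ?thesis using kfield_0 \<open>coeff P i = _\<close> by (simp add: nth_default_def)
    qed
  qed
  moreover have "poly P x = 0" using p(3) by (simp add: RC_eval P_def)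
  ultimately show "x \<in> kbar \<iota>" unfolding kbar_def by blast
qed

lemma kbar_eq: "kbar \<iota> = {x \<in> carrier RC. (ring.algebraic RC over (kfield \<iota>)) x}"
  using kbar_alg by auto

lemma kbar_subfield: "subfield (kbar \<iota>) RC"
  unfolding kbar_eq using field.subfield_of_algebraics[OF RC_field kfield_subfield] .

lemma kbar_add: "x \<in> kbar \<iota> \<Longrightarrow> y \<in> kbar \<iota> \<Longrightarrow> x + y \<in> kbar \<iota>"
  using subringE(7)[OF subfieldE(1)[OF kbar_subfield]] by simp
lemma kbar_mult: "x \<in> kbar \<iota> \<Longrightarrow> y \<in> kbar \<iota> \<Longrightarrow> x * y \<in> kbar \<iota>"
  using subringE(6)[OF subfieldE(1)[OF kbar_subfield]] by simp
lemma kbar_uminus: "x \<in> kbar \<iota> \<Longrightarrow> - x \<in> kbar \<iota>"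
  using subringE(5)[OF subfieldE(1)[OF kbar_subfield]] by (simp add: RC_neg)
lemma kbar_0: "0 \<in> kbar \<iota>"
  using subringE(2)[OF subfieldE(1)[OF kbar_subfield]] by simp
lemma kbar_1: "1 \<in> kbar \<iota>"
  using subringE(3)[OF subfieldE(1)[OF kbar_subfield]] by simp
lemma kbar_diff: "x \<in> kbar \<iota> \<Longrightarrow> y \<in> kbar \<iota> \<Longrightarrow> x - y \<in> kbar \<iota>"
  using kbar_add[of x "-y"] kbar_uminus[of y] by simp
lemma kbar_inverse: "x \<in> kbar \<iota> \<Longrightarrow> inverse x \<in> kbar \<iota>"
proof -
  assume x: "x \<in> kbar \<iota>"
  show ?thesis
  proof (cases "x = 0")
    case True then show ?thesis using kbar_0 by simp
  next
    case False
    then show ?thesis using x RC_inv[of x]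
      using ring.subfield_m_inv(1)[OF RC_ring kbar_subfield, of x] by simp
  qed
qed
lemma kbar_kfield: "x \<in> kfield \<iota> \<Longrightarrow> x \<in> kbar \<iota>"
  unfolding kbar_alg using domain.algebraic_self[OF RC_domain subfieldE(1)[OF kfield_subfield]] by blast
lemma kbar_iota: "\<iota> a \<in> kbar \<iota>"
  using kbar_kfield kfield_iota by blast
lemma kbar_sum: "(\<And>i. i \<in> A \<Longrightarrow> f i \<in> kbar \<iota>) \<Longrightarrow> sum f A \<in> kbar \<iota>"
  by (induction A rule: infinite_finite_induct) (auto simp: kbar_0 kbar_add)

end


lemma ff_pow_card: "(x::'f::{finite,field}) ^ CARD('f) = x"
proof (cases "x = 0")
  case False
  have "x * (\<Prod>y\<in>UNIV-{0}. x * y) = x * x ^ (card (UNIV :: 'f set) - 1) * \<Prod>(UNIV-{0})"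
    by (simp add: prod.distrib mult_ac)
  also have "x * x ^ (card (UNIV :: 'f set) - 1) = x ^ Suc (card (UNIV :: 'f set) - 1)"
    by (subst power_Suc) auto
  also have "Suc (card (UNIV :: 'f set) - 1) = card (UNIV :: 'f set)"
    using finite_UNIV_card_ge_0[where ?'a = 'f] by simp
  also have "(\<Prod>y\<in>UNIV-{0}. x * y) = (\<Prod>y\<in>UNIV-{0}. y)"
    by (rule prod.reindex_bij_witness[of _ "\<lambda>y. y / x" "\<lambda>y. x * y"]) (use False in auto)
  finally show ?thesis
    by simp
qed (use finite_UNIV_card_ge_0[where ?'a = 'f] in auto)

lemma card_ff_pos: "CARD('f::{finite,field}) > 0"
  using finite_UNIV_card_ge_0[where ?'a = 'f] by simp

lemma sum_split_ends:
  assumes "(n::nat) > 0"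
  shows "(\<Sum>k\<le>n. f k) = f 0 + f n + (\<Sum>k\<in>{1..<n}. f k)"
proof -
  have "{..n} = insert 0 (insert n {1..<n})" using assms by auto
  then show ?thesis using assms by (simp add: add.assoc)
qed

lemma ff_binom_zero:
  assumes "0 < k" "k < CARD('f::{finite,field})"
  shows "of_nat (CARD('f) choose k) = (0::'f)"
proof -
  define q where "q = CARD('f)"
  have q0: "q > 0" using card_ff_pos q_def by simp
  define P :: "'f poly" where "P = (\<Sum>j\<in>{1..<q}. monom (of_nat (q choose j)) j)"
  have root: "poly P c = 0" for c :: 'f
  proof -
    have "poly P c = (\<Sum>j\<in>{1..<q}. of_nat (q choose j) * c ^ j)"
      by (simp add: P_def poly_sum poly_monom)
    also have "\<dots> = (c + 1) ^ q - c ^ q - 1"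
      using binomial_ring[of c 1 q] sum_split_ends[OF q0, of "\<lambda>j. of_nat (q choose j) * c ^ j * 1 ^ (q - j)"]
      by simp
    also have "\<dots> = 0" using ff_pow_card[of "c+1"] ff_pow_card[of c] by (simp add: q_def)
    finally show ?thesis .
  qed
  have "P = 0"
  proof (rule ccontr)
    assume "P \<noteq> 0"
    then have "card {x. poly P x = 0} \<le> degree P" by (rule card_poly_roots_bound)
    moreover have "{x. poly P x = 0} = UNIV" using root by auto
    moreover have "degree P < q"
      unfolding P_def by (rule degree_sum_less) (use q0 in \<open>auto intro: le_less_trans[OF degree_monom_le]\<close>)
    ultimately show False by (simp add: q_def)
  qed
  then have "coeff P k = 0" by simp
  moreover have "coeff P k = of_nat (q choose k)"
    using assms by (simp add: P_def coeff_sum coeff_monom q_def)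
  ultimately show ?thesis by (simp add: q_def)
qed

context cinf
begin

lemma binom_zero_c:
  assumes "0 < k" "k < CARD('f)"
  shows "of_nat (CARD('f) choose k) = (0::'c)"
proof -
  have "of_nat (CARD('f) choose k) = \<iota> (of_nat (CARD('f) choose k))" by (simp add: iota_of_nat)
  also have "(of_nat (CARD('f) choose k) :: 'f poly) = [:of_nat (CARD('f) choose k):]" by (rule of_nat_poly)
  also have "\<dots> = 0" using ff_binom_zero[OF assms] by simp
  finally show ?thesis by simp
qed

lemma frob_add: "(x + y :: 'c) ^ CARD('f) = x ^ CARD('f) + y ^ CARD('f)"
proof -
  define q where "q = CARD('f)"
  have q0: "q > 0" using card_ff_pos q_def by simp
  have "(x + y) ^ q = (\<Sum>k\<le>q. of_nat (q choose k) * x ^ k * y ^ (q - k))" by (rule binomial_ring)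
  also have "\<dots> = y ^ q + x ^ q + (\<Sum>k\<in>{1..<q}. of_nat (q choose k) * x ^ k * y ^ (q - k))"
    using sum_split_ends[OF q0, of "\<lambda>k. of_nat (q choose k) * x ^ k * y ^ (q - k)"] by simp
  also have "(\<Sum>k\<in>{1..<q}. of_nat (q choose k) * x ^ k * y ^ (q - k)) = (0::'c)"
    by (rule sum.neutral) (auto simp: binom_zero_c q_def)
  finally show ?thesis by (simp add: q_def add.commute)
qed

lemma frob_inj: assumes "(x::'c) ^ CARD('f) = y ^ CARD('f)" shows "x = y"
proof -
  have q0: "CARD('f) > 0" using card_ff_pos by simp
  have "(y + - y) ^ CARD('f) = y ^ CARD('f) + (- y) ^ CARD('f)" by (rule frob_add)
  moreover have "(0::'c) ^ CARD('f) = 0" using q0 by simp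
  ultimately have "y ^ CARD('f) + (- y) ^ CARD('f) = 0" by simp
  then have neg: "(- y) ^ CARD('f) = - (y ^ CARD('f))" by (simp add: eq_neg_iff_add_eq_0 add.commute)
  have "(x + - y) ^ CARD('f) = x ^ CARD('f) + (- y) ^ CARD('f)" by (rule frob_add)
  then have "(x - y) ^ CARD('f) = 0" using assms neg by simp
  then show ?thesis by simp
qed

lemma qroot_pow: "qroot CARD('f) (x ^ CARD('f)) = (x::'c)"
  unfolding qroot_def by (rule the_equality) (auto intro: frob_inj)

lemma qroot_const: "qroot CARD('f) (\<iota> [:c:]) = \<iota> [:c:]"
proof -
  have "\<iota> [:c:] ^ CARD('f) = \<iota> ([:c:] ^ CARD('f))" by (simp add: iota_power)
  also have "[:c:] ^ CARD('f) = [:c ^ CARD('f):]" by (simp add: poly_const_pow)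
  also have "c ^ CARD('f) = c" by (rule ff_pow_card)
  finally show ?thesis using qroot_pow[of "\<iota> [:c:]"] by simp
qed

end


context cinf
begin

lemma kpoly_iff: "kpoly \<iota> p \<longleftrightarrow> (\<forall>i. coeff p i \<in> kbar \<iota>)" by (simp add: kpoly_def)

lemma kpoly_0[simp]: "kpoly \<iota> 0" by (simp add: kpoly_def kbar_0)
lemma kpoly_pCons[simp]: "kpoly \<iota> (pCons a p) \<longleftrightarrow> a \<in> kbar \<iota> \<and> kpoly \<iota> p"
  by (auto simp: kpoly_def coeff_pCons split: nat.splits)
lemma kpoly_const: "a \<in> kbar \<iota> \<Longrightarrow> kpoly \<iota> [:a:]" by simp
lemma kpoly_1[simp]: "kpoly \<iota> 1" by (simp add: one_pCons kbar_1)
lemma kpoly_add: "kpoly \<iota> p \<Longrightarrow> kpoly \<iota> r \<Longrightarrow> kpoly \<iota> (p + r)"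
  by (simp add: kpoly_def kbar_add)
lemma kpoly_uminus: "kpoly \<iota> p \<Longrightarrow> kpoly \<iota> (- p)"
  by (simp add: kpoly_def kbar_uminus)
lemma kpoly_diff: "kpoly \<iota> p \<Longrightarrow> kpoly \<iota> r \<Longrightarrow> kpoly \<iota> (p - r)"
  by (simp add: kpoly_def kbar_diff)
lemma kpoly_smult: "a \<in> kbar \<iota> \<Longrightarrow> kpoly \<iota> p \<Longrightarrow> kpoly \<iota> (smult a p)"
  by (simp add: kpoly_def kbar_mult)
lemma kpoly_mult: "kpoly \<iota> p \<Longrightarrow> kpoly \<iota> r \<Longrightarrow> kpoly \<iota> (p * r)"
  by (simp add: kpoly_def coeff_mult kbar_sum kbar_mult)
lemma kpoly_fq: "kpoly \<iota> (map_poly (\<lambda>c. \<iota> [:c:]) a)"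
  by (simp add: kpoly_def coeff_map_poly kbar_iota)

end

locale ktsm = cinf \<iota> v for \<iota> :: "'f::{finite,field} poly \<Rightarrow> 'c::field" and v +
  fixes M :: "('c, 'h::ab_group_add) ktsmod"
  assumes kts: "kts_module \<iota> M"
begin

abbreviation "S \<equiv> kscal M"
abbreviation "T \<equiv> tact M"
abbreviation "Sg \<equiv> sact M"
abbreviation "KB \<equiv> kbar \<iota>"

lemma S_add: "x \<in> KB \<Longrightarrow> S x (h + h') = S x h + S x h'" using kts unfolding kts_module_def by blast
lemma S_addl: "x \<in> KB \<Longrightarrow> y \<in> KB \<Longrightarrow> S (x + y) h = S x h + S y h" using kts unfolding kts_module_def by blast
lemma S_mult: "x \<in> KB \<Longrightarrow> y \<in> KB \<Longrightarrow> S (x * y) h = S x (S y h)" using kts unfolding kts_module_def by blast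
lemma S_one[simp]: "S 1 h = h" using kts unfolding kts_module_def by blast
lemma T_add: "T (h + h') = T h + T h'" using kts unfolding kts_module_def by blast
lemma T_S: "x \<in> KB \<Longrightarrow> T (S x h) = S x (T h)" using kts unfolding kts_module_def by blast
lemma Sg_add: "Sg (h + h') = Sg h + Sg h'" using kts unfolding kts_module_def by blast
lemma Sg_S: "x \<in> KB \<Longrightarrow> Sg (S x h) = S (qroot CARD('f) x) (Sg h)" using kts unfolding kts_module_def by blast
lemma T_Sg: "T (Sg h) = Sg (T h)" using kts unfolding kts_module_def by blast

lemma S_zero[simp]: "x \<in> KB \<Longrightarrow> S x 0 = 0"
  using S_add[of x 0 0] by simp
lemma S_0[simp]: "S 0 h = 0"
  using S_addl[OF kbar_0 kbar_0, of h] by simp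
lemma T_zero[simp]: "T 0 = 0"
  using T_add[of 0 0] by simp
lemma Sg_zero[simp]: "Sg 0 = 0"
  using Sg_add[of 0 0] by simp
lemma S_sum: "x \<in> KB \<Longrightarrow> S x (sum f A) = (\<Sum>i\<in>A. S x (f i))"
  by (induction A rule: infinite_finite_induct) (simp_all add: S_add)
lemma T_sum: "T (sum f A) = (\<Sum>i\<in>A. T (f i))"
  by (induction A rule: infinite_finite_induct) (simp_all add: T_add)
lemma Sg_sum: "Sg (sum f A) = (\<Sum>i\<in>A. Sg (f i))"
  by (induction A rule: infinite_finite_induct) (simp_all add: Sg_add)

lemma tpoly_alt:
  assumes "degree p < N"
  shows "tpoly M p h = (\<Sum>i<N. S (coeff p i) ((T ^^ i) h))"
  unfolding tpoly_def
proof (rule sum.mono_neutral_left)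
  show "finite {..<N}" by simp
  show "{..degree p} \<subseteq> {..<N}" using assms by auto
  show "\<forall>i\<in>{..<N} - {..degree p}. S (coeff p i) ((T ^^ i) h) = 0"
    by (auto simp: coeff_eq_0)
qed

lemma tpoly_0[simp]: "tpoly M 0 h = 0"
  by (simp add: tpoly_def)

lemma tpoly_pCons:
  assumes "kpoly \<iota> p"
  shows "tpoly M (pCons a p) h = S a h + T (tpoly M p h)"
proof -
  define N where "N = Suc (degree p)"
  have d1: "degree (pCons a p) < Suc N" unfolding N_def
    by (metis degree_pCons_le le_imp_less_Suc)
  have "tpoly M (pCons a p) h = (\<Sum>i<Suc N. S (coeff (pCons a p) i) ((T ^^ i) h))"
    by (rule tpoly_alt[OF d1])
  also have "\<dots> = S a h + (\<Sum>i<N. S (coeff p i) ((T ^^ Suc i) h))"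
    by (subst sum.lessThan_Suc_shift) simp
  also have "(\<Sum>i<N. S (coeff p i) ((T ^^ Suc i) h)) = T (\<Sum>i<N. S (coeff p i) ((T ^^ i) h))"
    using assms by (simp add: T_sum T_S kpoly_def)
  also have "(\<Sum>i<N. S (coeff p i) ((T ^^ i) h)) = tpoly M p h"
    by (rule tpoly_alt[symmetric]) (simp add: N_def)
  finally show ?thesis .
qed

lemma tpoly_const: "tpoly M [:a:] h = S a h"
  using tpoly_pCons[of 0 a h] by simp

lemma tpoly_add_h: "kpoly \<iota> p \<Longrightarrow> tpoly M p (h + h') = tpoly M p h + tpoly M p h'"
proof (induction p)
  case 0 then show ?case by simp
next
  case (pCons a p)
  then show ?case by (simp add: tpoly_pCons S_add T_add algebra_simps)
qed

lemma tpoly_zero_h[simp]: "kpoly \<iota> p \<Longrightarrow> tpoly M p 0 = 0"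
  using tpoly_add_h[of p 0 0] by simp

lemma tpoly_sum_h: "kpoly \<iota> p \<Longrightarrow> tpoly M p (sum f A) = (\<Sum>i\<in>A. tpoly M p (f i))"
  by (induction A rule: infinite_finite_induct) (simp_all add: tpoly_add_h)

lemma tpoly_add_p: "kpoly \<iota> p \<Longrightarrow> kpoly \<iota> r \<Longrightarrow> tpoly M (p + r) h = tpoly M p h + tpoly M r h"
proof (induction p r rule: poly_induct2)
  case 0 then show ?case by simp
next
  case (pCons a p b r)
  have "tpoly M (pCons a p + pCons b r) h = tpoly M (pCons (a + b) (p + r)) h" by simp
  also have "\<dots> = S (a + b) h + T (tpoly M (p + r) h)"
    using pCons by (simp add: tpoly_pCons kpoly_add)
  also have "\<dots> = tpoly M (pCons a p) h + tpoly M (pCons b r) h"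
    using pCons by (simp add: tpoly_pCons S_addl T_add algebra_simps)
  finally show ?case .
qed

lemma tpoly_S: "x \<in> KB \<Longrightarrow> kpoly \<iota> p \<Longrightarrow> tpoly M p (S x h) = S x (tpoly M p h)"
proof (induction p)
  case 0 then show ?case by simp
next
  case (pCons a p)
  then show ?case
    by (simp add: tpoly_pCons S_add T_S S_mult[symmetric] mult.commute)
qed

lemma tpoly_smult: "x \<in> KB \<Longrightarrow> kpoly \<iota> p \<Longrightarrow> tpoly M (smult x p) h = S x (tpoly M p h)"
proof (induction p)
  case 0 then show ?case by simp
next
  case (pCons a p)
  then show ?case
    by (simp add: tpoly_pCons kpoly_smult S_add T_S S_mult)
qed

lemma tpoly_mult: "kpoly \<iota> p \<Longrightarrow> kpoly \<iota> r \<Longrightarrow> tpoly M (p * r) h = tpoly M p (tpoly M r h)"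
proof (induction p)
  case 0 then show ?case by simp
next
  case (pCons a p)
  have "tpoly M (pCons a p * r) h = tpoly M (smult a r + pCons 0 (p * r)) h" by simp
  also have "\<dots> = tpoly M (smult a r) h + tpoly M (pCons 0 (p * r)) h"
    using pCons by (intro tpoly_add_p) (simp_all add: kpoly_smult kpoly_mult kbar_0)
  also have "\<dots> = S a (tpoly M r h) + T (tpoly M (p * r) h)"
    using pCons by (simp add: tpoly_smult tpoly_pCons kpoly_mult kbar_0)
  also have "\<dots> = tpoly M (pCons a p) (tpoly M r h)"
    using pCons by (simp add: tpoly_pCons)
  finally show ?case .
qed

lemma tpoly_Sg:
  assumes "\<forall>i. coeff p i \<in> KB \<and> qroot CARD('f) (coeff p i) = coeff p i"
  shows "Sg (tpoly M p h) = tpoly M p (Sg h)"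
  using assms
proof (induction p)
  case 0 then show ?case by simp
next
  case (pCons a p)
  have a: "a \<in> KB" "qroot CARD('f) a = a" using pCons.prems[rule_format, of 0] by auto
  have p: "\<forall>i. coeff p i \<in> KB \<and> qroot CARD('f) (coeff p i) = coeff p i"
    using pCons.prems by (metis coeff_pCons_Suc)
  then have kp: "kpoly \<iota> p" by (simp add: kpoly_def)
  show ?case using a p kp pCons.IH
    by (simp add: tpoly_pCons Sg_add Sg_S T_Sg[symmetric])
qed

lemma tpoly_fq_Sg: "Sg (tpoly M (map_poly (\<lambda>c. \<iota> [:c:]) a) h) = tpoly M (map_poly (\<lambda>c. \<iota> [:c:]) a) (Sg h)"
  by (rule tpoly_Sg) (simp add: coeff_map_poly kbar_iota qroot_const)

end

lemma (in cinf) morph_tpoly: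
  assumes "kts_morphism \<iota> M0 M1 f" "kpoly \<iota> p"
    and "ktsm \<iota> v M0" "ktsm \<iota> v M1"
  shows "f (tpoly M0 p h) = tpoly M1 p (f h)"
  using assms(2)
proof (induction p)
  case 0
  have "f 0 = 0" using assms(1) unfolding kts_morphism_def by (metis add_cancel_right_right)
  then show ?case using ktsm.tpoly_0[OF assms(3)] ktsm.tpoly_0[OF assms(4)] by simp
next
  case (pCons a p)
  have f: "\<forall>h h'. f (h + h') = f h + f h'" "\<forall>x\<in>kbar \<iota>. \<forall>h. f (kscal M0 x h) = kscal M1 x (f h)"
     "\<forall>h. f (tact M0 h) = tact M1 (f h)" using assms(1) unfolding kts_morphism_def by blast+
  show ?case using pCons f
    by (simp add: ktsm.tpoly_pCons[OF assms(3)] ktsm.tpoly_pCons[OF assms(4)])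
qed



locale dtmf = ktsm \<iota> v M for \<iota> :: "'f::{finite,field} poly \<Rightarrow> 'c::field" and v and M :: "('c, 'h::ab_group_add) ktsmod" +
  assumes free: "free_fin \<iota> (tpoly M)"
begin

definition bas where "bas = (SOME b. \<forall>h. \<exists>!ps. length ps = length b \<and> (\<forall>p\<in>set ps. kpoly \<iota> p) \<and>
   h = (\<Sum>j<length b. tpoly M (ps ! j) (b ! j)))"

abbreviation "rk \<equiv> length bas"

lemma bas_prop: "\<forall>h. \<exists>!ps. length ps = rk \<and> (\<forall>p\<in>set ps. kpoly \<iota> p) \<and> h = (\<Sum>j<rk. tpoly M (ps ! j) (bas ! j))"
proof -
  have "\<exists>b. \<forall>h. \<exists>!ps. length ps = length b \<and> (\<forall>p\<in>set ps. kpoly \<iota> p) \<and> h = (\<Sum>j<length b. tpoly M (ps ! j) (b ! j))"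
    using free unfolding free_fin_def .
  then show ?thesis unfolding bas_def by (rule someI_ex)
qed

definition crdl where "crdl h = (THE ps. length ps = rk \<and> (\<forall>p\<in>set ps. kpoly \<iota> p) \<and> h = (\<Sum>j<rk. tpoly M (ps ! j) (bas ! j)))"

definition crd where "crd h j = (if j < rk then crdl h ! j else 0)"

lemma crdl_prop: "length (crdl h) = rk \<and> (\<forall>p\<in>set (crdl h). kpoly \<iota> p) \<and> h = (\<Sum>j<rk. tpoly M (crdl h ! j) (bas ! j))"
  unfolding crdl_def by (rule theI'[OF bas_prop[rule_format, of h]])

lemma crd_kpoly: "kpoly \<iota> (crd h j)"
  using crdl_prop[of h] by (auto simp: crd_def)

lemma crd_rep: "h = (\<Sum>j<rk. tpoly M (crd h j) (bas ! j))"
  using crdl_prop[of h] by (simp add: crd_def)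

lemma crd_unique:
  assumes "\<And>j. kpoly \<iota> (c j)" "\<And>j. j \<ge> rk \<Longrightarrow> c j = 0" "h = (\<Sum>j<rk. tpoly M (c j) (bas ! j))"
  shows "crd h j = c j"
proof (cases "j < rk")
  case True
  define ps where "ps = map c [0..<rk]"
  have P: "length ps = rk \<and> (\<forall>p\<in>set ps. kpoly \<iota> p) \<and> h = (\<Sum>j<rk. tpoly M (ps ! j) (bas ! j))"
    using assms by (auto simp: ps_def)
  have "ps = crdl h" unfolding crdl_def by (rule the1_equality[OF bas_prop[rule_format, of h] P, symmetric])
  then have "crdl h ! j = ps ! j" by simp
  also have "\<dots> = c j" using True by (simp add: ps_def)
  finally show ?thesis using True by (simp add: crd_def)
next
  case False
  then show ?thesis using assms(2) by (simp add: crd_def)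
qed

lemma crd_ext: "(\<And>j. crd h j = crd h' j) \<Longrightarrow> h = h'"
  using crd_rep[of h] crd_rep[of h'] by simp

lemma crd_ge: "j \<ge> rk \<Longrightarrow> crd h j = 0" by (simp add: crd_def)

lemma crd_add: "crd (h + h') j = crd h j + crd h' j"
proof (rule crd_unique)
  show "kpoly \<iota> (crd h j + crd h' j)" for j by (simp add: kpoly_add crd_kpoly)
  show "crd h j + crd h' j = 0" if "j \<ge> rk" for j using that by (simp add: crd_ge)
  have "h + h' = (\<Sum>j<rk. tpoly M (crd h j) (bas ! j)) + (\<Sum>j<rk. tpoly M (crd h' j) (bas ! j))"
    using crd_rep[of h] crd_rep[of h'] by simp
  also have "\<dots> = (\<Sum>j<rk. tpoly M (crd h j + crd h' j) (bas ! j))"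
    by (simp add: sum.distrib tpoly_add_p crd_kpoly)
  finally show "h + h' = (\<Sum>j<rk. tpoly M (crd h j + crd h' j) (bas ! j))" .
qed

lemma crd_tpoly: assumes "kpoly \<iota> p" shows "crd (tpoly M p h) j = p * crd h j"
proof (rule crd_unique)
  show "kpoly \<iota> (p * crd h j)" for j by (simp add: kpoly_mult crd_kpoly assms)
  show "p * crd h j = 0" if "j \<ge> rk" for j using that by (simp add: crd_ge)
  have "tpoly M p h = tpoly M p (\<Sum>j<rk. tpoly M (crd h j) (bas ! j))"
    using crd_rep[of h] by simp
  also have "\<dots> = (\<Sum>j<rk. tpoly M (p * crd h j) (bas ! j))"
    using assms by (simp add: tpoly_sum_h tpoly_mult crd_kpoly)
  finally show "tpoly M p h = (\<Sum>j<rk. tpoly M (p * crd h j) (bas ! j))" .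
qed

lemma crd_zero[simp]: "crd 0 j = 0"
proof -
  have "crd 0 j + crd 0 j = crd 0 j + 0" using crd_add[of 0 0 j] by simp
  then show ?thesis by (rule add_left_imp_eq)
qed

lemma crd_sum: "crd (sum f A) j = (\<Sum>i\<in>A. crd (f i) j)"
  by (induction A rule: infinite_finite_induct) (simp_all add: crd_add)

lemma crd_S: "x \<in> KB \<Longrightarrow> crd (S x h) j = smult x (crd h j)"
  using crd_tpoly[of "[:x:]" h j] by (simp add: tpoly_const)

end



lemma fps_sadd: "Abs_fps (sadd g g') = Abs_fps g + Abs_fps g'"
  by (simp add: fps_ext sadd_def)
lemma fps_smult_ser: "Abs_fps (smult_ser g g') = Abs_fps g * Abs_fps g'"
  by (simp add: fps_ext smult_ser_def fps_mult_nth atLeast0AtMost)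
lemma fps_polyser: "Abs_fps (polyser p) = fps_of_poly p"
  by (simp add: fps_ext polyser_def)
lemma fps_zero_ser: "Abs_fps (\<lambda>n. 0) = 0"
  by (simp add: fps_ext)
lemma fps_nth_Abs[simp]: "fps_nth (Abs_fps g) = g"
  by (simp add: Abs_fps_inverse)
lemma sadd_nth: "sadd (fps_nth f) (fps_nth g) = fps_nth (f + g)"
  by (simp add: sadd_def fun_eq_iff)
lemma smult_ser_nth: "smult_ser (fps_nth f) (fps_nth g) = fps_nth (f * g)"
proof -
  have "Abs_fps (smult_ser (fps_nth f) (fps_nth g)) = f * g" by (simp add: fps_smult_ser fps_nth_inverse)
  then show ?thesis by (metis fps_nth_Abs)
qed

context cinf
begin

lemma tate_iff: "tate v g \<longleftrightarrow> (\<forall>r>0. \<exists>N. \<forall>n\<ge>N. v (g n) < r)"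
  unfolding tate_def LIMSEQ_iff using v_nonneg by simp

lemma v_sum_le: "(\<And>i. i \<in> A \<Longrightarrow> v (f i) \<le> c) \<Longrightarrow> 0 \<le> c \<Longrightarrow> v (sum f A) \<le> c"
proof (induction A rule: infinite_finite_induct)
  case (insert x F)
  then have "v (f x + sum f F) \<le> max (v (f x)) (v (sum f F))" using v_ultra by blast
  also have "\<dots> \<le> c" using insert by auto
  finally show ?case using insert by simp
qed simp_all

lemma tate_zero: "tate v (\<lambda>n. 0)" unfolding tate_iff by simp

lemma tate_sadd: assumes "tate v g" "tate v g'" shows "tate v (sadd g g')"
  unfolding tate_iff
proof (intro allI impI)
  fix r :: real assume r: "r > 0"
  obtain N1 where "\<forall>n\<ge>N1. v (g n) < r" using assms(1) r unfolding tate_iff by blast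
  moreover obtain N2 where "\<forall>n\<ge>N2. v (g' n) < r" using assms(2) r unfolding tate_iff by blast
  ultimately have "\<forall>n\<ge>max N1 N2. v (sadd g g' n) < r"
    unfolding sadd_def by (meson le_less_trans max.boundedE max_less_iff_conj v_ultra)
  then show "\<exists>N. \<forall>n\<ge>N. v (sadd g g' n) < r" by blast
qed

lemma tate_bounded: assumes "tate v g" shows "\<exists>B>0. \<forall>n. v (g n) \<le> B"
proof -
  have "convergent (\<lambda>n. v (g n))" using assms unfolding tate_def convergent_def by blast
  then have "Bseq (\<lambda>n. v (g n))" by (rule convergent_imp_Bseq)
  then obtain B where B: "B > 0" "\<forall>n. norm (v (g n)) \<le> B" by (rule BseqE)
  have vB: "\<And>n. v (g n) \<le> B" using B v_nonneg by (metis abs_of_nonneg real_norm_def)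
  show ?thesis using B(1) vB by blast
qed

lemma tate_smult: assumes "tate v g" "tate v g'" shows "tate v (smult_ser g g')"
  unfolding tate_iff
proof (intro allI impI)
  fix r :: real assume r: "r > 0"
  obtain B1 where B1: "B1 > 0" "\<And>n. v (g n) \<le> B1" using tate_bounded[OF assms(1)] by blast
  obtain B2 where B2: "B2 > 0" "\<And>n. v (g' n) \<le> B2" using tate_bounded[OF assms(2)] by blast
  define B where "B = max B1 B2"
  have B: "B > 0" "\<And>n. v (g n) \<le> B" "\<And>n. v (g' n) \<le> B"
    using B1 B2 unfolding B_def by (auto simp: le_max_iff_disj)
  define e where "e = r / (2 * B)"
  have e: "e > 0" using r B by (simp add: e_def)
  obtain N1 where N1: "\<forall>n\<ge>N1. v (g n) < e" using assms(1) e unfolding tate_iff by blast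
  obtain N2 where N2: "\<forall>n\<ge>N2. v (g' n) < e" using assms(2) e unfolding tate_iff by blast
  define N where "N = N1 + N2"
  have "v (smult_ser g g' n) < r" if n: "n \<ge> N" for n
  proof -
    have eB: "e * B = r / 2" using B by (simp add: e_def)
    have "v (g i * g' (n - i)) \<le> r / 2" if "i \<in> {..n}" for i
    proof (cases "i \<ge> N1")
      case True
      then have "v (g i) \<le> e" using N1 by (simp add: less_imp_le)
      then have "v (g i) * v (g' (n - i)) \<le> e * B"
        using B v_nonneg e by (intro mult_mono) auto
      then show ?thesis using eB by (simp add: v_mult)
    next
      case False
      then have "n - i \<ge> N2" using n unfolding N_def by simp
      then have "v (g' (n - i)) \<le> e" using N2 by (simp add: less_imp_le)
      then have "v (g i) * v (g' (n - i)) \<le> B * e"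
        using B v_nonneg e by (intro mult_mono) auto
      then show ?thesis using eB by (simp add: v_mult mult.commute)
    qed
    then have "v (smult_ser g g' n) \<le> r / 2"
      unfolding smult_ser_def using r by (intro v_sum_le) auto
    then show ?thesis using r by simp
  qed
  then show "\<exists>N. \<forall>n\<ge>N. v (smult_ser g g' n) < r" by blast
qed

lemma tate_polyser: "tate v (polyser p)"
proof -
  have "eventually (\<lambda>n. v (polyser p n) = 0) sequentially"
    by (rule eventually_sequentiallyI[of "Suc (degree p)"]) (simp add: polyser_def coeff_eq_0)
  then show ?thesis unfolding tate_def by (rule tendsto_eventually)
qed

definition tatef :: "'c fps \<Rightarrow> bool" where "tatef f \<longleftrightarrow> tate v (fps_nth f)"

lemma tatef_Abs: "tatef (Abs_fps g) \<longleftrightarrow> tate v g" by (simp add: tatef_def)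
lemma tatef_add: "tatef f \<Longrightarrow> tatef g \<Longrightarrow> tatef (f + g)"
  using tate_sadd unfolding tatef_def by (metis sadd_nth)
lemma tatef_mult: "tatef f \<Longrightarrow> tatef g \<Longrightarrow> tatef (f * g)"
  using tate_smult unfolding tatef_def by (metis smult_ser_nth)
lemma tatef_0: "tatef 0"
proof -
  have "fps_nth (0::'c fps) = (\<lambda>n. 0)" by (simp add: fun_eq_iff)
  then show ?thesis using tate_zero by (simp add: tatef_def)
qed
lemma tatef_poly: "tatef (fps_of_poly p)"
proof -
  have "fps_nth (fps_of_poly p) = polyser p" by (simp add: fun_eq_iff polyser_def)
  then show ?thesis using tate_polyser[of p] by (simp add: tatef_def)
qed
lemma tatef_sum_list: "(\<And>x. x \<in> set xs \<Longrightarrow> tatef x) \<Longrightarrow> tatef (sum_list xs)"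
  by (induction xs) (auto simp: tatef_0 tatef_add)

end



lemma tildeD_simps[simp]:
  "Adom (tildeD \<iota> v M) = tate v" "Bdom (tildeD \<iota> v M) = (\<lambda>_. True)" "Rs (tildeD \<iota> v M) = kpoly \<iota>"
  "aadd (tildeD \<iota> v M) = sadd" "azero (tildeD \<iota> v M) = (\<lambda>n. 0)" "badd (tildeD \<iota> v M) = (+)"
  "bzero (tildeD \<iota> v M) = 0" "ra (tildeD \<iota> v M) = (\<lambda>r g. smult_ser (polyser r) g)"
  "rb (tildeD \<iota> v M) = tpoly M" "Beq (tildeD \<iota> v M) = (=)"
  by (simp_all add: tildeD_def)

context dtmf
begin

definition Phi :: "('c series \<times> 'h) list \<Rightarrow> nat \<Rightarrow> 'c fps" where
  "Phi Xs j = sum_list (map (\<lambda>(g, h). Abs_fps g * fps_of_poly (crd h j)) Xs)"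

lemma Phi_Nil[simp]: "Phi [] j = 0" by (simp add: Phi_def)
lemma Phi_Cons: "Phi ((g, h) # Xs) j = Abs_fps g * fps_of_poly (crd h j) + Phi Xs j"
  by (simp add: Phi_def)
lemma Phi_append: "Phi (Xs @ Ys) j = Phi Xs j + Phi Ys j" by (simp add: Phi_def)
lemma Phi_single: "Phi [(g, h)] j = Abs_fps g * fps_of_poly (crd h j)" by (simp add: Phi_def)

lemma Phi_inv: "teq \<iota> v M Xs Ys \<Longrightarrow> Phi Xs = Phi Ys"
  unfolding teq_def
proof (induction rule: tens_eq.induct)
  case (app L L' M M')
  then show ?case by (simp add: fun_eq_iff Phi_append)
next
  case (comm L M)
  then show ?case by (simp add: fun_eq_iff Phi_append add.commute)
next
  case (addl a a' b)
  then show ?case by (simp add: fun_eq_iff Phi_def fps_sadd distrib_right)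
next
  case (addr a b b')
  then show ?case by (simp add: fun_eq_iff Phi_def crd_add fps_of_poly_add distrib_left)
next
  case (zl b)
  then show ?case by (simp add: fun_eq_iff Phi_def fps_zero_ser)
next
  case (zr a)
  then show ?case by (simp add: fun_eq_iff Phi_def)
next
  case (bal r a b)
  then show ?case by (simp add: fun_eq_iff Phi_def fps_smult_ser fps_polyser crd_tpoly fps_of_poly_mult mult_ac)
qed simp_all

lemma Phi_tatef: "tvalid (tildeD \<iota> v M) Xs \<Longrightarrow> tatef (Phi Xs j)"
proof (induction Xs)
  case (Cons x Xs)
  obtain g h where x: "x = (g, h)" by (cases x)
  have "tate v g" "tvalid (tildeD \<iota> v M) Xs" using Cons.prems x by (auto simp: tvalid_def)
  then show ?case using Cons.IH x
    by (simp add: Phi_Cons tatef_add tatef_mult tatef_Abs tatef_poly)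
qed (simp add: tatef_0)

abbreviation "TE \<equiv> teq \<iota> v M"

lemma te_refl: "TE Xs Xs" unfolding teq_def by (rule tens_eq.refl)
lemma te_sym: "TE Xs Ys \<Longrightarrow> TE Ys Xs" unfolding teq_def by (rule tens_eq.sym)
lemma te_trans: "TE Xs Ys \<Longrightarrow> TE Ys Z \<Longrightarrow> TE Xs Z" unfolding teq_def by (rule tens_eq.trans)
lemma te_app: "TE Xs Xs' \<Longrightarrow> TE Ys Ys' \<Longrightarrow> TE (Xs @ Ys) (Xs' @ Ys')" unfolding teq_def by (rule tens_eq.app)
lemma te_comm: "TE (Xs @ Ys) (Ys @ Xs)" unfolding teq_def by (rule tens_eq.comm)
lemma te_addl: "tate v a \<Longrightarrow> tate v a' \<Longrightarrow> TE [(sadd a a', b)] [(a, b), (a', b)]"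
  unfolding teq_def using tens_eq.addl[of "tildeD \<iota> v M" a a' b] by simp
lemma te_addr: "tate v a \<Longrightarrow> TE [(a, b + b')] [(a, b), (a, b')]"
  unfolding teq_def using tens_eq.addr[of "tildeD \<iota> v M" a b b'] by simp
lemma te_zl: "TE [(\<lambda>n. 0, b)] []"
  unfolding teq_def using tens_eq.zl[of "tildeD \<iota> v M" b] by simp
lemma te_zr: "tate v a \<Longrightarrow> TE [(a, 0)] []"
  unfolding teq_def using tens_eq.zr[of "tildeD \<iota> v M" a] by simp
lemma te_bal: "kpoly \<iota> r \<Longrightarrow> tate v a \<Longrightarrow> TE [(smult_ser (polyser r) a, b)] [(a, tpoly M r b)]"
  unfolding teq_def using tens_eq.bal[of "tildeD \<iota> v M" r a b] by simp
lemma te_Cons: "TE [x] [y] \<Longrightarrow> TE Xs Ys \<Longrightarrow> TE (x # Xs) (y # Ys)"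
  using te_app[of "[x]" "[y]" Xs Ys] by simp

definition canon :: "(nat \<Rightarrow> 'c fps) \<Rightarrow> nat list \<Rightarrow> ('c series \<times> 'h) list" where
  "canon \<phi> js = map (\<lambda>j. (fps_nth (\<phi> j), bas ! j)) js"

lemma canon_zero: "TE (canon (\<lambda>j. 0) js) []"
proof (induction js)
  case Nil then show ?case by (simp add: canon_def te_refl)
next
  case (Cons j js)
  have z: "fps_nth (0::'c fps) = (\<lambda>n. 0)" by (simp add: fun_eq_iff)
  have "TE ([(\<lambda>n. 0, bas ! j)] @ canon (\<lambda>j. 0) js) ([] @ [])"
    by (rule te_app[OF te_zl Cons.IH])
  then show ?case by (simp add: canon_def z)
qed

lemma canon_merge:
  assumes "\<And>j. tatef (\<phi> j)" "\<And>j. tatef (\<psi> j)"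
  shows "TE (canon \<phi> js @ canon \<psi> js) (canon (\<lambda>j. \<phi> j + \<psi> j) js)"
proof (induction js)
  case Nil then show ?case by (simp add: canon_def te_refl)
next
  case (Cons j js)
  define x where "x = (fps_nth (\<phi> j), bas ! j)"
  define y where "y = (fps_nth (\<psi> j), bas ! j)"
  define A where "A = canon \<phi> js"
  define B where "B = canon \<psi> js"
  have E1: "canon \<phi> (j # js) @ canon \<psi> (j # js) = [x] @ ((A @ [y]) @ B)"
    by (simp add: canon_def x_def y_def A_def B_def)
  have T1: "TE ([x] @ ((A @ [y]) @ B)) ([x] @ (([y] @ A) @ B))"
    by (rule te_app[OF te_refl te_app[OF te_comm te_refl]])
  have E2: "[x] @ (([y] @ A) @ B) = [x, y] @ (A @ B)" by simp
  have T2: "TE ([x, y] @ (A @ B)) ([(sadd (fps_nth (\<phi> j)) (fps_nth (\<psi> j)), bas ! j)] @ canon (\<lambda>j. \<phi> j + \<psi> j) js)"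
  proof (rule te_app)
    show "TE [x, y] [(sadd (fps_nth (\<phi> j)) (fps_nth (\<psi> j)), bas ! j)]"
      unfolding x_def y_def by (rule te_sym, rule te_addl) (use assms in \<open>simp_all add: tatef_def\<close>)
    show "TE (A @ B) (canon (\<lambda>j. \<phi> j + \<psi> j) js)" using Cons.IH by (simp add: A_def B_def)
  qed
  have E3: "[(sadd (fps_nth (\<phi> j)) (fps_nth (\<psi> j)), bas ! j)] @ canon (\<lambda>j. \<phi> j + \<psi> j) js
      = canon (\<lambda>j. \<phi> j + \<psi> j) (j # js)"
    by (simp add: canon_def sadd_nth)
  have "TE (canon \<phi> (j # js) @ canon \<psi> (j # js)) ([x, y] @ (A @ B))"
    using T1 unfolding E1 E2 .
  from te_trans[OF this T2] show ?case unfolding E3 .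
qed

lemma single_sum:
  assumes "tate v g"
  shows "TE [(g, sum_list (map f js))] (map (\<lambda>j. (g, f j)) js)"
proof (induction js)
  case Nil then show ?case using te_zr[OF assms] by simp
next
  case (Cons j js)
  have 1: "TE [(g, f j + sum_list (map f js))] [(g, f j), (g, sum_list (map f js))]"
    by (rule te_addr[OF assms])
  have 2: "TE [(g, f j), (g, sum_list (map f js))] ((g, f j) # map (\<lambda>j. (g, f j)) js)"
    by (rule te_Cons[OF te_refl Cons.IH])
  show ?case using te_trans[OF 1 2] by simp
qed

lemma single_canon:
  assumes "tate v g"
  shows "TE [(g, h)] (canon (Phi [(g, h)]) [0..<rk])"
proof -
  have "h = sum_list (map (\<lambda>j. tpoly M (crd h j) (bas ! j)) [0..<rk])"
    using crd_rep[of h] by (simp add: interv_sum_list_conv_sum_set_nat atLeast0LessThan)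
  then have 1: "TE [(g, h)] (map (\<lambda>j. (g, tpoly M (crd h j) (bas ! j))) [0..<rk])"
    using single_sum[OF assms, of "\<lambda>j. tpoly M (crd h j) (bas ! j)" "[0..<rk]"] by simp
  have 2: "TE (map (\<lambda>j. (g, tpoly M (crd h j) (bas ! j))) js)
             (map (\<lambda>j. (smult_ser (polyser (crd h j)) g, bas ! j)) js)" for js
  proof (induction js)
    case Nil then show ?case by (simp add: te_refl)
  next
    case (Cons j js)
    then show ?case using te_Cons[OF te_sym[OF te_bal[OF crd_kpoly assms]] Cons.IH] by simp
  qed
  have 3: "fps_nth (Phi [(g, h)] j) = smult_ser (polyser (crd h j)) g" for j
  proof -
    have "Phi [(g, h)] j = Abs_fps (smult_ser (polyser (crd h j)) g)"
      by (simp add: Phi_single fps_smult_ser fps_polyser mult.commute)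
    then show ?thesis by simp
  qed
  show ?thesis using te_trans[OF 1 2] by (simp add: canon_def 3)
qed

lemma canon_Phi: "tvalid (tildeD \<iota> v M) Xs \<Longrightarrow> TE Xs (canon (Phi Xs) [0..<rk])"
proof (induction Xs)
  case Nil
  have "(Phi [] :: nat \<Rightarrow> 'c fps) = (\<lambda>j. 0)" by (simp add: fun_eq_iff)
  then show ?case using te_sym[OF canon_zero] by simp
next
  case (Cons x Xs)
  obtain g h where x: "x = (g, h)" by (cases x)
  have g: "tate v g" and Xs: "tvalid (tildeD \<iota> v M) Xs" using Cons.prems x by (auto simp: tvalid_def)
  have vx: "tvalid (tildeD \<iota> v M) [(g, h)]" using g by (simp add: tvalid_def)
  have "TE ([(g, h)] @ Xs) (canon (Phi [(g, h)]) [0..<rk] @ canon (Phi Xs) [0..<rk])"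
    by (rule te_app[OF single_canon[OF g] Cons.IH[OF Xs]])
  moreover have "TE (canon (Phi [(g, h)]) [0..<rk] @ canon (Phi Xs) [0..<rk])
      (canon (\<lambda>j. Phi [(g, h)] j + Phi Xs j) [0..<rk])"
    by (rule canon_merge) (simp_all add: Phi_tatef[OF vx] Phi_tatef[OF Xs])
  ultimately have "TE ([(g, h)] @ Xs) (canon (\<lambda>j. Phi [(g, h)] j + Phi Xs j) [0..<rk])"
    by (rule te_trans)
  moreover have "(\<lambda>j. Phi [(g, h)] j + Phi Xs j) = Phi (x # Xs)"
    by (simp add: fun_eq_iff x Phi_Cons Phi_single)
  ultimately have "TE ([(g, h)] @ Xs) (canon (Phi (x # Xs)) [0..<rk])"
    by simp
  then show ?case using x by simp
qed

lemma Phi_inj: "tvalid (tildeD \<iota> v M) Xs \<Longrightarrow> tvalid (tildeD \<iota> v M) Ys \<Longrightarrow> Phi Xs = Phi Ys \<Longrightarrow> TE Xs Ys"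
proof -
  assume a: "tvalid (tildeD \<iota> v M) Xs" "tvalid (tildeD \<iota> v M) Ys" "Phi Xs = Phi Ys"
  have "TE Xs (canon (Phi Ys) [0..<rk])" using canon_Phi[OF a(1)] a(3) by simp
  then show "TE Xs Ys" using te_trans te_sym[OF canon_Phi[OF a(2)]] by blast
qed

end



context ktsm
begin
lemma tpoly_T: "kpoly \<iota> p \<Longrightarrow> T (tpoly M p h) = tpoly M p (T h)"
proof (induction p)
  case 0 then show ?case by simp
next
  case (pCons a p)
  then show ?case by (simp add: tpoly_pCons T_add T_S)
qed
end

lemma conv_split:
  fixes A :: "'a::comm_ring_1 poly"
  assumes "degree A = d"
  shows "(\<Sum>i\<le>k + d. coeff A i * c (k + d - i)) = coeff A d * c k + (\<Sum>i<d. coeff A i * c (k + d - i))"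
proof -
  have "(\<Sum>i\<le>k + d. coeff A i * c (k + d - i)) = (\<Sum>i\<le>d. coeff A i * c (k + d - i))"
    by (rule sum.mono_neutral_right) (auto simp: assms coeff_eq_0)
  also have "\<dots> = coeff A d * c k + (\<Sum>i<d. coeff A i * c (k + d - i))"
    by (simp add: lessThan_Suc_atMost[symmetric])
  finally show ?thesis .
qed

context cinf
begin

abbreviation fqp :: "'f poly \<Rightarrow> 'c poly" where "fqp a \<equiv> map_poly (\<lambda>c. \<iota> [:c:]) a"

lemma fqp_coeff: "coeff (fqp a) i = \<iota> [:coeff a i:]"
  by (simp add: coeff_map_poly)

lemma fqp_degree: "degree (fqp a) = degree a"
  by (rule degree_map_poly) (simp add: iota_eq0)

lemma fqp_nonzero: "a \<noteq> 0 \<Longrightarrow> fqp a \<noteq> 0"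
  by (metis fqp_coeff fqp_degree iota_eq0 leading_coeff_0_iff pCons_eq_0_iff coeff_0)

lemma fqp_lead: "a \<noteq> 0 \<Longrightarrow> coeff (fqp a) (degree (fqp a)) \<noteq> 0"
  using fqp_nonzero by simp

lemma v_sum_less: "(\<And>i. i \<in> A \<Longrightarrow> v (f i) < e) \<Longrightarrow> 0 < e \<Longrightarrow> v (sum f A) < e"
proof (induction A rule: infinite_finite_induct)
  case (insert x F)
  then have "v (f x + sum f F) \<le> max (v (f x)) (v (sum f F))" using v_ultra by blast
  also have "\<dots> < e" using insert by auto
  finally show ?case using insert by simp
qed simp_all

lemma fq_div_ser:
  assumes a: "a \<noteq> 0" and y: "tatef y" and eq: "fps_of_poly (fqp a) * y = fps_of_poly x"
  shows "\<exists>Y. y = fps_of_poly Y"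
proof -
  define A where "A = fqp a"
  define d where "d = degree A"
  define N0 where "N0 = Suc (degree x)"
  have Ad: "v (coeff A d) = 1"
    using a by (simp add: A_def d_def fqp_coeff fqp_degree v_const)
  have Ai: "v (coeff A i) \<le> 1" for i by (simp add: A_def fqp_coeff v_const_le)
  have rec: "coeff A d * y $ k = - (\<Sum>i<d. coeff A i * y $ (k + d - i))" if "k \<ge> N0" for k
  proof -
    have "(fps_of_poly A * y) $ (k + d) = coeff x (k + d)" using eq by (simp add: A_def)
    also have "\<dots> = 0" using that by (simp add: N0_def coeff_eq_0)
    finally have "(\<Sum>i\<le>k + d. coeff A i * y $ (k + d - i)) = 0"
      by (simp add: fps_mult_nth atLeast0AtMost)
    then have "coeff A d * y $ k + (\<Sum>i<d. coeff A i * y $ (k + d - i)) = 0"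
      using conv_split[of A d "\<lambda>n. y $ n" k] by (simp add: d_def)
    then show ?thesis by (simp add: eq_neg_iff_add_eq_0)
  qed
  have zero: "y $ k = 0" if "k \<ge> N0" for k
  proof (rule ccontr)
    assume nz: "y $ k \<noteq> 0"
    define e where "e = v (y $ k)"
    have e: "e > 0" using nz v_nonneg v_zero_iff by (simp add: e_def less_le)
    obtain N where N: "\<forall>n\<ge>N. v (y $ n) < e" using y e unfolding tatef_def tate_iff by blast
    define S where "S = {n. N0 \<le> n \<and> e \<le> v (y $ n)}"
    have "S \<subseteq> {..<N}" using N by (auto simp: S_def not_less[symmetric])
    then have fin: "finite S" by (rule finite_subset) simp
    have "k \<in> S" using that by (simp add: S_def e_def)
    define km where "km = Max S"
    have km: "km \<in> S" unfolding km_def using fin \<open>k \<in> S\<close> by (intro Max_in) auto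
    have big: "v (y $ n) < e" if "n > km" for n
    proof (rule ccontr)
      assume "\<not> v (y $ n) < e"
      then have "n \<in> S" using that km by (simp add: S_def)
      then have "n \<le> km" using fin by (simp add: km_def)
      then show False using that by simp
    qed
    have "v (\<Sum>i<d. coeff A i * y $ (km + d - i)) < e"
    proof (rule v_sum_less)
      fix i assume "i \<in> {..<d}"
      then have "v (y $ (km + d - i)) < e" by (intro big) auto
      moreover have "v (coeff A i * y $ (km + d - i)) \<le> v (y $ (km + d - i))"
        using Ai[of i] v_nonneg by (simp add: v_mult mult_left_le_one_le)
      ultimately show "v (coeff A i * y $ (km + d - i)) < e" by simp
    qed (rule e)
    moreover have "v (coeff A d * y $ km) = v (y $ km)" using Ad by (simp add: v_mult)
    moreover have "N0 \<le> km" using km by (simp add: S_def)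
    ultimately have "v (y $ km) < e" using rec[of km] by simp
    then show False using km by (simp add: S_def)
  qed
  define Y where "Y = Poly (map (fps_nth y) [0..<N0])"
  have "y = fps_of_poly Y"
  proof (rule fps_ext)
    fix n show "y $ n = fps_of_poly Y $ n"
      using zero[of n] by (cases "n < N0") (auto simp: Y_def nth_default_def)
  qed
  then show ?thesis by blast
qed

lemma fq_div_kpoly:
  assumes a: "a \<noteq> 0" and eq: "fqp a * Y = x" and kx: "kpoly \<iota> x"
  shows "kpoly \<iota> Y"
proof (rule ccontr)
  assume "\<not> kpoly \<iota> Y"
  define A where "A = fqp a"
  define d where "d = degree A"
  define B where "B = {k. coeff Y k \<notin> kbar \<iota>}"
  have "B \<noteq> {}" using \<open>\<not> kpoly \<iota> Y\<close> by (auto simp: B_def kpoly_def)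
  have "B \<subseteq> {..degree Y}"
  proof
    fix k assume "k \<in> B"
    show "k \<in> {..degree Y}"
    proof (rule ccontr)
      assume "k \<notin> {..degree Y}"
      then have "coeff Y k = 0" by (simp add: coeff_eq_0)
      then show False using \<open>k \<in> B\<close> kbar_0 by (simp add: B_def)
    qed
  qed
  then have fin: "finite B" by (rule finite_subset) simp
  define km where "km = Max B"
  have km: "km \<in> B" using fin \<open>B \<noteq> {}\<close> by (simp add: km_def)
  have above: "coeff Y n \<in> kbar \<iota>" if "n > km" for n
  proof (rule ccontr)
    assume "coeff Y n \<notin> kbar \<iota>"
    then have "n \<in> B" by (simp add: B_def)
    then have "n \<le> km" using fin by (simp add: km_def)
    then show False using that by simp
  qed
  have "coeff x (km + d) = (\<Sum>i\<le>km + d. coeff A i * coeff Y (km + d - i))"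
    using eq[symmetric] by (simp add: A_def coeff_mult)
  also have "\<dots> = coeff A d * coeff Y km + (\<Sum>i<d. coeff A i * coeff Y (km + d - i))"
    by (rule conv_split) (simp add: d_def)
  finally have "coeff Y km = inverse (coeff A d) * (coeff x (km + d) - (\<Sum>i<d. coeff A i * coeff Y (km + d - i)))"
    using fqp_lead[OF a] by (simp add: A_def d_def field_simps)
  moreover have "inverse (coeff A d) \<in> kbar \<iota>" by (simp add: A_def fqp_coeff kbar_inverse kbar_iota)
  moreover have "coeff x (km + d) \<in> kbar \<iota>" using kx by (simp add: kpoly_def)
  moreover have "(\<Sum>i<d. coeff A i * coeff Y (km + d - i)) \<in> kbar \<iota>"
    by (intro kbar_sum kbar_mult above) (auto simp: A_def fqp_coeff kbar_iota)
  ultimately have "coeff Y km \<in> kbar \<iota>" by (simp add: kbar_mult kbar_diff)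
  then show False using km by (simp add: B_def)
qed

end


lemma bettiD_simps[simp]:
  "Adom (bettiD \<iota> v M) = tate v" "Bdom (bettiD \<iota> v M) = betti \<iota> v M"
  by (simp_all add: bettiD_def)

lemma betti_map_append: "betti_map f (Xs @ Ys) = betti_map f Xs @ betti_map f Ys"
  by (simp add: betti_map_def)

lemma betti_map_rat_map: "betti_map f (rat_map K) = rat_map (map (\<lambda>(g, L). (g, betti_map f L)) K)"
  by (induction K) (auto simp: rat_map_def betti_map_def)

lemma betti_map_comp: "betti_map f (betti_map f' L) = betti_map (\<lambda>h. f (f' h)) L"
  by (induction L) (auto simp: betti_map_def)

lemma fqser_fps: "Abs_fps (fqser \<iota> a) = fps_of_poly (map_poly (\<lambda>c. \<iota> [:c:]) a)"
  by (simp add: fqser_def fps_polyser)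

lemma tvalid_tildeD: "tvalid (tildeD \<iota> v M) L \<longleftrightarrow> (\<forall>(g, h)\<in>set L. tate v g)"
  by (auto simp: tvalid_def)

lemma tvalid_betti_map: "tvalid (tildeD \<iota> v M0) L \<Longrightarrow> tvalid (tildeD \<iota> v M1) (betti_map f L)"
  by (auto simp: tvalid_def betti_map_def)

lemma betti_tvalid: "betti \<iota> v M L \<Longrightarrow> tvalid (tildeD \<iota> v M) L"
  by (simp add: betti_def)

lemma tvalid_bettiD: "tvalid (bettiD \<iota> v M) K \<Longrightarrow> (g, L) \<in> set K \<Longrightarrow> tate v g \<and> betti \<iota> v M L"
  by (auto simp: tvalid_def)

context dtmf
begin

lemma Phi_smult_list: "Phi (map (\<lambda>(g', h). (smult_ser g g', h)) L) j = Abs_fps g * Phi L j"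
  by (induction L) (auto simp: Phi_Cons fps_smult_ser distrib_left mult.assoc)

lemma Phi_rat_map: "Phi (rat_map K) j = sum_list (map (\<lambda>(g, L). Abs_fps g * Phi L j) K)"
proof (induction K)
  case Nil then show ?case by (simp add: rat_map_def)
next
  case (Cons x K)
  obtain g L where x: "x = (g, L)" by (cases x)
  have "rat_map (x # K) = map (\<lambda>(g', h). (smult_ser g g', h)) L @ rat_map K"
    by (simp add: rat_map_def x)
  then show ?case using Cons by (simp add: Phi_append Phi_smult_list x)
qed

lemma Phi_fqact: "Phi (fqact \<iota> a L) j = fps_of_poly (fqp a) * Phi L j"
  by (induction L) (auto simp: fqact_def Phi_Cons fps_smult_ser fqser_fps distrib_left mult.assoc)

lemma Phi_tpoly_map: "kpoly \<iota> A \<Longrightarrow> Phi (betti_map (tpoly M A) L) j = fps_of_poly A * Phi L j"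
  by (induction L) (auto simp: betti_map_def Phi_Cons crd_tpoly fps_of_poly_mult algebra_simps)

lemma Phi_one: "Phi [(polyser 1, h)] j = fps_of_poly (crd h j)"
  by (simp add: Phi_single fps_polyser)

end

locale two = m0: dtmf \<iota> v M0 + m1: dtmf \<iota> v M1
  for \<iota> :: "'f::{finite,field} poly \<Rightarrow> 'c::field" and v
  and M0 :: "('c, 'h0::ab_group_add) ktsmod" and M1 :: "('c, 'h1::ab_group_add) ktsmod"
begin

lemma ktsm0: "ktsm \<iota> v M0" by (simp add: ktsm_def ktsm_axioms_def cinf_def m0.Cinf m0.kts)
lemma ktsm1: "ktsm \<iota> v M1" by (simp add: ktsm_def ktsm_axioms_def cinf_def m0.Cinf m1.kts)

lemma morph_props:
  assumes "kts_morphism \<iota> M0 M1 f"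
  shows "f (h + h') = f h + f h'" "f 0 = 0" "kpoly \<iota> r \<Longrightarrow> f (tpoly M0 r h) = tpoly M1 r (f h)"
proof -
  show a: "f (h + h') = f h + f h'" for h h' using assms unfolding kts_morphism_def by blast
  show "f 0 = 0" using a[of 0 0] by (metis add_cancel_right_right)
  show "kpoly \<iota> r \<Longrightarrow> f (tpoly M0 r h) = tpoly M1 r (f h)"
    using m0.morph_tpoly[OF assms _ ktsm0 ktsm1] by blast
qed

lemma betti_map_tens:
  assumes f: "kts_morphism \<iota> M0 M1 f"
  shows "tens_eq (tildeD \<iota> v M0) Xs Ys \<Longrightarrow> teq \<iota> v M1 (betti_map f Xs) (betti_map f Ys)"
proof (induction rule: tens_eq.induct)
  case (refl L) then show ?case by (rule m1.te_refl)
next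
  case (sym L L') then show ?case using m1.te_sym by blast
next
  case (trans L L' L'') then show ?case using m1.te_trans by blast
next
  case (app L L' M M') then show ?case by (simp add: betti_map_append m1.te_app)
next
  case (comm L M) then show ?case by (simp add: betti_map_append m1.te_comm)
next
  case (addl a a' b) then show ?case by (simp add: betti_map_def m1.te_addl)
next
  case (addr a b b') then show ?case by (simp add: betti_map_def m1.te_addr morph_props[OF f])
next
  case (zl b) then show ?case by (simp add: betti_map_def m1.te_zl)
next
  case (zr a) then show ?case by (simp add: betti_map_def m1.te_zr morph_props[OF f])
next
  case (bal r a b) then show ?case by (simp add: betti_map_def m1.te_bal morph_props[OF f])
next
  case (beq a b b') then show ?case by (simp add: m1.te_refl)
qed

lemma betti_map_teq:
  "kts_morphism \<iota> M0 M1 f \<Longrightarrow> teq \<iota> v M0 Xs Ys \<Longrightarrow> teq \<iota> v M1 (betti_map f Xs) (betti_map f Ys)"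
  unfolding teq_def[of _ _ M0] by (rule betti_map_tens)

lemma key:
  assumes f: "kts_morphism \<iota> M0 M1 f"
    and K: "teq \<iota> v M0 (rat_map K) [(polyser 1, h)]"
  shows "fps_of_poly (m1.crd (f h) j) = sum_list (map (\<lambda>(g, L). Abs_fps g * m1.Phi (betti_map f L) j) K)"
proof -
  have "teq \<iota> v M1 (betti_map f (rat_map K)) (betti_map f [(polyser 1, h)])"
    by (rule betti_map_teq[OF f K])
  then have "m1.Phi (betti_map f (rat_map K)) = m1.Phi (betti_map f [(polyser 1, h)])"
    by (rule m1.Phi_inv)
  moreover have "m1.Phi (betti_map f (rat_map K)) j = sum_list (map (\<lambda>(g, L). Abs_fps g * m1.Phi (betti_map f L) j) K)"
    unfolding betti_map_rat_map m1.Phi_rat_map map_map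
    by (intro arg_cong[where f = sum_list] map_cong) auto
  moreover have "m1.Phi (betti_map f [(polyser 1, h)]) j = fps_of_poly (m1.crd (f h) j)"
    by (simp add: betti_map_def m1.Phi_one)
  ultimately show ?thesis by metis
qed

lemma rig_K:
  assumes rig: "rigid_an_triv \<iota> v M0"
  obtains K where "tvalid (bettiD \<iota> v M0) K" "teq \<iota> v M0 (rat_map K) [(polyser 1, h)]"
proof -
  have "tvalid (tildeD \<iota> v M0) [(polyser 1, h)]" by (simp add: tvalid_def m0.tate_polyser)
  then show ?thesis using rig that unfolding rigid_an_triv_def by blast
qed

theorem part1:
  assumes rig: "rigid_an_triv \<iota> v M0"
  and f: "kts_morphism \<iota> M0 M1 f" and f': "kts_morphism \<iota> M0 M1 f'"
  and he: "hom_eq \<iota> v M0 M1 (betti_map f) (betti_map f')"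
  shows "f = f'"
proof
  fix h
  obtain K where K: "tvalid (bettiD \<iota> v M0) K" "teq \<iota> v M0 (rat_map K) [(polyser 1, h)]"
    using rig_K[OF rig] by blast
  have "m1.Phi (betti_map f L) = m1.Phi (betti_map f' L)" if "(g, L) \<in> set K" for g L
  proof -
    have "betti \<iota> v M0 L" using tvalid_bettiD[OF K(1) that] by blast
    then show ?thesis using he unfolding hom_eq_def by (intro m1.Phi_inv) blast
  qed
  then have "sum_list (map (\<lambda>(g, L). Abs_fps g * m1.Phi (betti_map f L) j) K)
     = sum_list (map (\<lambda>(g, L). Abs_fps g * m1.Phi (betti_map f' L) j) K)" for j
    by (intro arg_cong[where f = sum_list] map_cong) auto
  then have "fps_of_poly (m1.crd (f h) j) = fps_of_poly (m1.crd (f' h) j)" for j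
    using key[OF f K(2)] key[OF f' K(2)] by simp
  then show "f h = f' h" by (intro m1.crd_ext) (simp add: fps_of_poly_eq_iff)
qed

end


context two
begin

theorem part2:
  assumes rig: "rigid_an_triv \<iota> v M0" and psi: "betti_hom \<iota> v M0 M1 \<psi>" and a: "a \<noteq> 0"
    and f: "kts_morphism \<iota> M0 M1 f"
    and he: "hom_eq \<iota> v M0 M1 (betti_map f) (\<lambda>L. fqact \<iota> a (\<psi> L))"
  shows "\<exists>f'. kts_morphism \<iota> M0 M1 f' \<and> hom_eq \<iota> v M0 M1 (betti_map f') \<psi>"
proof -
  define A where "A = m0.fqp a"
  have kA: "kpoly \<iota> A" unfolding A_def by (rule m0.kpoly_fq)
  have A0: "A \<noteq> 0" unfolding A_def using a by (rule m0.fqp_nonzero)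
  have A0f: "fps_of_poly A \<noteq> 0" using A0 by (metis fps_of_poly_0 fps_of_poly_eq_iff)
  have psiB: "betti \<iota> v M1 (\<psi> L)" if "betti \<iota> v M0 L" for L
    using psi that unfolding betti_hom_def by blast
  have Phi_f: "m1.Phi (betti_map f L) j = fps_of_poly A * m1.Phi (\<psi> L) j" if "betti \<iota> v M0 L" for L j
  proof -
    have "m1.Phi (betti_map f L) = m1.Phi (fqact \<iota> a (\<psi> L))"
      using he that unfolding hom_eq_def by (intro m1.Phi_inv) blast
    then show ?thesis by (simp add: m1.Phi_fqact A_def)
  qed
  have div: "\<exists>h'. f h = tpoly M1 A h'" for h
  proof -
    obtain K where K: "tvalid (bettiD \<iota> v M0) K" "teq \<iota> v M0 (rat_map K) [(polyser 1, h)]"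
      using rig_K[OF rig] by blast
    have "\<exists>Y. m1.crd (f h) j = A * Y \<and> kpoly \<iota> Y" for j
    proof -
      define y where "y = sum_list (map (\<lambda>(g, L). Abs_fps g * m1.Phi (\<psi> L) j) K)"
      have "fps_of_poly (m1.crd (f h) j) = sum_list (map (\<lambda>(g, L). Abs_fps g * m1.Phi (betti_map f L) j) K)"
        by (rule key[OF f K(2)])
      also have "\<dots> = sum_list (map (\<lambda>(g, L). fps_of_poly A * (Abs_fps g * m1.Phi (\<psi> L) j)) K)"
      proof (intro arg_cong[where f = sum_list] map_cong[OF HOL.refl])
        fix x assume "x \<in> set K"
        obtain g L where x0: "x = (g, L)" by (cases x)
        then have x: "x = (g, L)" "(g, L) \<in> set K" using \<open>x \<in> set K\<close> by auto
        then have "betti \<iota> v M0 L" using tvalid_bettiD[OF K(1)] by blast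
        then show "(case x of (g, L) \<Rightarrow> Abs_fps g * m1.Phi (betti_map f L) j) =
             (case x of (g, L) \<Rightarrow> fps_of_poly A * (Abs_fps g * m1.Phi (\<psi> L) j))"
          using x by (simp add: Phi_f mult_ac)
      qed
      also have "\<dots> = fps_of_poly A * y"
        unfolding y_def by (induction K) (auto simp: distrib_left)
      finally have eq: "fps_of_poly A * y = fps_of_poly (m1.crd (f h) j)" by simp
      have ty: "m0.tatef y"
        unfolding y_def
      proof (rule m0.tatef_sum_list)
        fix z assume "z \<in> set (map (\<lambda>(g, L). Abs_fps g * m1.Phi (\<psi> L) j) K)"
        then obtain g L where z: "z = Abs_fps g * m1.Phi (\<psi> L) j" "(g, L) \<in> set K" by auto
        then have "tate v g" "betti \<iota> v M0 L" using tvalid_bettiD[OF K(1)] by blast+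
        then show "m0.tatef z" using z m1.Phi_tatef[OF betti_tvalid[OF psiB]]
          by (simp add: m0.tatef_mult m0.tatef_Abs)
      qed
      obtain Y where Y: "y = fps_of_poly Y" using m0.fq_div_ser[OF a ty eq[unfolded A_def]] by blast
      have "m1.crd (f h) j = A * Y" using eq Y by (simp add: fps_of_poly_mult[symmetric] fps_of_poly_eq_iff)
      moreover have "kpoly \<iota> Y"
      proof (rule m0.fq_div_kpoly[OF a])
        show "m0.fqp a * Y = m1.crd (f h) j" using \<open>m1.crd (f h) j = A * Y\<close> by (simp add: A_def)
        show "kpoly \<iota> (m1.crd (f h) j)" by (rule m1.crd_kpoly)
      qed
      ultimately show ?thesis by blast
    qed
    then obtain Yf where Yf: "\<And>j. m1.crd (f h) j = A * Yf j" "\<And>j. kpoly \<iota> (Yf j)" by metis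
    define c where "c j = (if j < m1.rk then Yf j else 0)" for j
    define h' where "h' = (\<Sum>j<m1.rk. tpoly M1 (c j) (m1.bas ! j))"
    have ch: "m1.crd h' j = c j" for j
      by (rule m1.crd_unique) (auto simp: c_def h'_def Yf(2))
    have "m1.crd (tpoly M1 A h') j = m1.crd (f h) j" for j
      using ch[of j] Yf(1)[of j] m1.crd_ge[of j "f h"] by (simp add: m1.crd_tpoly[OF kA] c_def)
    then have "tpoly M1 A h' = f h" by (rule m1.crd_ext)
    then show ?thesis by metis
  qed
  have inj: "x = y" if "tpoly M1 A x = tpoly M1 A y" for x y
  proof (rule m1.crd_ext)
    fix j
    have "A * m1.crd x j = A * m1.crd y j" using that m1.crd_tpoly[OF kA] by metis
    then show "m1.crd x j = m1.crd y j" using A0 by simp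
  qed
  define f' where "f' h = (THE h'. f h = tpoly M1 A h')" for h
  have f'1: "f h = tpoly M1 A (f' h)" for h
  proof -
    have "\<exists>!h'. f h = tpoly M1 A h'" using div[of h] inj by metis
    then show ?thesis unfolding f'_def by (rule theI')
  qed
  have f'2: "f' h = z" if "f h = tpoly M1 A z" for h z
    using f'1[of h] that inj by metis
  have fprops: "\<forall>h h'. f (h + h') = f h + f h'" "\<forall>x\<in>kbar \<iota>. \<forall>h. f (kscal M0 x h) = kscal M1 x (f h)"
     "\<forall>h. f (tact M0 h) = tact M1 (f h)" "\<forall>h. f (sact M0 h) = sact M1 (f h)"
    using f unfolding kts_morphism_def by blast+
  have "kts_morphism \<iota> M0 M1 f'"
    unfolding kts_morphism_def
  proof (intro conjI allI ballI)
    fix h h'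
    show "f' (h + h') = f' h + f' h'"
      by (rule f'2) (simp add: fprops(1) f'1[symmetric] m1.tpoly_add_h[OF kA])
  next
    fix x h assume x: "x \<in> kbar \<iota>"
    show "f' (kscal M0 x h) = kscal M1 x (f' h)"
      by (rule f'2) (simp add: fprops(2) x f'1[symmetric] m1.tpoly_S[OF x kA])
  next
    fix h
    show "f' (tact M0 h) = tact M1 (f' h)"
      by (rule f'2) (use fprops(3) f'1[of h] m1.tpoly_T[OF kA, of "f' h"] in simp)
  next
    fix h
    show "f' (sact M0 h) = sact M1 (f' h)"
      by (rule f'2) (use fprops(4) f'1[of h] m1.tpoly_fq_Sg[of a "f' h"] in \<open>simp add: A_def\<close>)
  qed
  moreover have "hom_eq \<iota> v M0 M1 (betti_map f') \<psi>"
    unfolding hom_eq_def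
  proof (intro allI impI)
    fix L assume L: "betti \<iota> v M0 L"
    have ff: "f = (\<lambda>h. tpoly M1 A (f' h))" using f'1 by (simp add: fun_eq_iff)
    have "fps_of_poly A * m1.Phi (betti_map f' L) j = fps_of_poly A * m1.Phi (\<psi> L) j" for j
    proof -
      have "fps_of_poly A * m1.Phi (betti_map f' L) j = m1.Phi (betti_map (tpoly M1 A) (betti_map f' L)) j"
        by (simp add: m1.Phi_tpoly_map[OF kA])
      also have "\<dots> = m1.Phi (betti_map f L) j" by (simp add: betti_map_comp ff)
      also have "\<dots> = fps_of_poly A * m1.Phi (\<psi> L) j" by (rule Phi_f[OF L])
      finally show ?thesis .
    qed
    then have "m1.Phi (betti_map f' L) = m1.Phi (\<psi> L)" using A0f by (simp add: fun_eq_iff)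
    then show "teq \<iota> v M1 (betti_map f' L) (\<psi> L)"
      by (rule m1.Phi_inj[OF tvalid_betti_map[OF betti_tvalid[OF L]] betti_tvalid[OF psiB[OF L]]])
  qed
  ultimately show ?thesis by blast
qed

end


theorem theorem4:
  fixes \<iota> :: "'f::{finite,field} poly \<Rightarrow> 'c::field" and v :: "'c \<Rightarrow> real"
    and M0 :: "('c, 'h0::ab_group_add) ktsmod" and M1 :: "('c, 'h1::ab_group_add) ktsmod"
  assumes "Cinf \<iota> v"
    and "dual_t_motive \<iota> M0" and "dual_t_motive \<iota> M1"
    and "rigid_an_triv \<iota> v M0" and "rigid_an_triv \<iota> v M1"
  shows "(\<forall>f f'. kts_morphism \<iota> M0 M1 f \<longrightarrow> kts_morphism \<iota> M0 M1 f' \<longrightarrow>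
            hom_eq \<iota> v M0 M1 (betti_map f) (betti_map f') \<longrightarrow> f = f')
       \<and> (\<forall>\<psi> a. betti_hom \<iota> v M0 M1 \<psi> \<longrightarrow> a \<noteq> 0 \<longrightarrow>
            (\<exists>f. kts_morphism \<iota> M0 M1 f \<and> hom_eq \<iota> v M0 M1 (betti_map f) (\<lambda>L. fqact \<iota> a (\<psi> L))) \<longrightarrow>
            (\<exists>f. kts_morphism \<iota> M0 M1 f \<and> hom_eq \<iota> v M0 M1 (betti_map f) \<psi>))"
proof -
  interpret t: two \<iota> v M0 M1
    using assms(1-3) by unfold_locales (auto simp: dual_t_motive_def)
  show ?thesis
  proof (intro conjI allI impI)
    fix f f'
    assume "kts_morphism \<iota> M0 M1 f" "kts_morphism \<iota> M0 M1 f'"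
      "hom_eq \<iota> v M0 M1 (betti_map f) (betti_map f')"
    then show "f = f'" by (rule t.part1[OF assms(4)])
  next
    fix \<psi> a
    assume psi: "betti_hom \<iota> v M0 M1 \<psi>" and a: "a \<noteq> 0"
      and ex: "\<exists>f. kts_morphism \<iota> M0 M1 f \<and> hom_eq \<iota> v M0 M1 (betti_map f) (\<lambda>L. fqact \<iota> a (\<psi> L))"
    then obtain f where f: "kts_morphism \<iota> M0 M1 f" "hom_eq \<iota> v M0 M1 (betti_map f) (\<lambda>L. fqact \<iota> a (\<psi> L))"
      by blast
    show "\<exists>f. kts_morphism \<iota> M0 M1 f \<and> hom_eq \<iota> v M0 M1 (betti_map f) \<psi>"
      by (rule t.part2[OF assms(4) psi a f])
  qed
qed

end
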